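(* Let $\mathbf{k}=(k_1,\ldots,k_n)$ be an admissible index and $\beta\in\mathbb{C}$ with $\mathrm{Re}\,\beta>0$. Let $D(\beta)=\{\alpha\in\mathbb{C}:|\alpha-\beta|<\mathrm{Re}\,\beta/2\}$. Then the series \[ \sum_{l=0}^{\infty}(\alpha-\beta)^l\sum_{i=0}^{l}\sum_{\substack{i_1+\cdots+i_{n-1}=i\\ i_j\in\mathbb{Z}_{\ge0}}}S_{l-i}(k_1,\{1\}^{i_1},k_2,\ldots,k_{n-1},\{1\}^{i_{n-1}},k_n;\alpha) \] and \[ \sum_{l=0}^{\infty}(\alpha-\beta)^l\sum_{i=0}^{l}\sum_{\mathbf{i}^{(1)}_{k_1-1}+\cdots+\mathbf{i}^{(n)}_{k_n-2}=i}S_{l-i}\bigl(k_1+\mathbf{i}^{(1)}_{k_1-1},\ldots,k_{n-1}+\mathbf{i}^{(n-1)}_{k_{n-1}-1},k_n+\mathbf{i}^{(n)}_{k_n-2};\alpha\bigr) \] converge absolutely for $\alpha\in D(\beta)$ and uniformly on every compact subset of $D(\beta)$.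
   Context: An index $(k_1,\ldots,k_n)$ is admissible if all $k_i$ are positive integers and $k_n\ge2$. For $a\in\mathbb{C}$, $(a)_0=1$ and $(a)_m=a(a+1)\cdots(a+m-1)$ for $m\ge1$. For an admissible index and $\mathrm{Re}\,\alpha>0$, \[ Z(\mathbf{k};\alpha)=\sum_{0\le m_1<\cdots<m_n}\frac{(\alpha)_{m_1}}{m_1!}\frac{m_n!}{(\alpha)_{m_n+1}}\frac{1}{(m_1+\alpha)^{k_1}\cdots(m_{n-1}+\alpha)^{k_{n-1}}(m_n+\alpha)^{k_n-1}}, \] and $S_l(\mathbf{k};\alpha):=\sum_{l_1+\cdots+l_n=l,\ l_i\in\mathbb{Z}_{\ge0}}Z(k_1+l_1,\ldots,k_n+l_n;\alpha)$. $\{1\}^a$ denotes $a$ consecutive entries equal to $1$. For $m\ge1$, $r\ge0$, $\mathbf{i}^{(m)}_r:=i^{(m)}_1+\cdots+i^{(m)}_r$ (equal to $0$ if $r=0$); the sum over $\mathbf{i}^{(1)}_{k_1-1}+\cdots+\mathbf{i}^{(n)}_{k_n-2}=i$ runs over all tuples of nonnegative integers $(i^{(1)}_1,\ldots,i^{(1)}_{k_1-1},\ldots,i^{(n)}_1,\ldots,i^{(n)}_{k_n-2})$ with total sum $i$. *)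

theory Defs
  imports "HOL-Analysis.Analysis"
begin

definition admissible :: "nat list \<Rightarrow> bool" where
  "admissible ks \<longleftrightarrow> ks \<noteq> [] \<and> (\<forall>k\<in>set ks. k > 0) \<and> last ks \<ge> 2"

definition Z_term :: "nat list \<Rightarrow> complex \<Rightarrow> nat list \<Rightarrow> complex" where
  "Z_term ks \<alpha> ms =
     pochhammer \<alpha> (hd ms) / of_nat (fact (hd ms))
     * of_nat (fact (last ms)) / pochhammer \<alpha> (last ms + 1)
     * (\<Prod>j<length ks - 1. 1 / (of_nat (ms ! j) + \<alpha>) ^ (ks ! j))
     * (1 / (of_nat (last ms) + \<alpha>) ^ (last ks - 1))"

definition Z :: "nat list \<Rightarrow> complex \<Rightarrow> complex" where
  "Z ks \<alpha> = infsum (Z_term ks \<alpha>)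
      {ms. length ms = length ks \<and> sorted_wrt (<) ms}"

definition S :: "nat \<Rightarrow> nat list \<Rightarrow> complex \<Rightarrow> complex" where
  "S l ks \<alpha> = (\<Sum>ls\<in>{ls. length ls = length ks \<and> sum_list ls = l}.
                  Z (map2 (+) ks ls) \<alpha>)"

text \<open>(k_1,{1}^{i_1},k_2,...,k_{n-1},{1}^{i_{n-1}},k_n) for is = [i_1,...,i_{n-1}].\<close>
definition ins_ones :: "nat list \<Rightarrow> nat list \<Rightarrow> nat list" where
  "ins_ones ks is = concat (map (\<lambda>(k, i). k # replicate i 1) (zip (butlast ks) is)) @ [last ks]"

text \<open>Number of variables i^{(m)}_j in block m (0-based m): k_m - 1, except k_n - 2 for the last.\<close>
definition blk_len :: "nat list \<Rightarrow> nat \<Rightarrow> nat" where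
  "blk_len ks m = (if m = length ks - 1 then ks ! m - 2 else ks ! m - 1)"

definition series1_term :: "nat list \<Rightarrow> complex \<Rightarrow> complex \<Rightarrow> nat \<Rightarrow> complex" where
  "series1_term ks \<beta> \<alpha> l = (\<alpha> - \<beta>) ^ l *
     (\<Sum>i\<le>l. \<Sum>is\<in>{is. length is = length ks - 1 \<and> sum_list is = i}.
        S (l - i) (ins_ones ks is) \<alpha>)"

definition series2_term :: "nat list \<Rightarrow> complex \<Rightarrow> complex \<Rightarrow> nat \<Rightarrow> complex" where
  "series2_term ks \<beta> \<alpha> l = (\<alpha> - \<beta>) ^ l *
     (\<Sum>i\<le>l. \<Sum>iss\<in>{iss. length iss = length ks
                          \<and> (\<forall>m<length ks. length (iss ! m) = blk_len ks m)
                          \<and> sum_list (map sum_list iss) = i}.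
        S (l - i) (map2 (\<lambda>k is. k + sum_list is) ks iss) \<alpha>)"

end

theory Submission
  imports Defs
begin


lemma poch_asymp:
  fixes z :: real assumes z: "z > 0"
  shows "\<exists>c1 c2. c1 > 0 \<and> c2 > 0 \<and> (\<forall>n. c1 * (real n + 1) powr z \<le> pochhammer z (n+1) / fact n
                \<and> pochhammer z (n+1) / fact n \<le> c2 * (real n + 1) powr z)"
proof -
  have nz: "z \<notin> \<int>\<^sub>\<le>\<^sub>0" using z by (auto elim!: nonpos_Ints_cases)
  have "convergent (Gamma_series z)" using Gamma_series_LIMSEQ[of z] by (auto simp: convergent_def)
  then obtain K1 where K1: "K1 > 0" "\<And>n. norm (Gamma_series z n) \<le> K1"
    using convergent_imp_Bseq BseqE by metis
  have "convergent (rGamma_series z)" using rGamma_series_LIMSEQ[of z] by (auto simp: convergent_def)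
  then obtain K2 where K2: "K2 > 0" "\<And>n. norm (rGamma_series z n) \<le> K2"
    using convergent_imp_Bseq BseqE by metis
  have pp: "pochhammer z m > 0" for m using z by (simp add: pochhammer_pos)
  have e1: "exp (z * ln (real n)) \<le> (real n + 1) powr z" for n
  proof (cases "n = 0")
    case True then show ?thesis by simp
  next
    case False
    then have "exp (z * ln (real n)) = real n powr z" by (simp add: powr_def)
    also have "\<dots> \<le> (real n + 1) powr z" using z by (intro powr_mono2) auto
    finally show ?thesis .
  qed
  have e2: "(real n + 1) powr z \<le> 2 powr z * exp (z * ln (real n))" for n
  proof (cases "n = 0")
    case True then show ?thesis using z by (simp add: ge_one_powr_ge_zero)
  next
    case False
    then have "exp (z * ln (real n)) = real n powr z" by (simp add: powr_def)
    moreover have "(real n + 1) powr z \<le> (2 * real n) powr z" using z False by (intro powr_mono2) auto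
    moreover have "(2 * real n) powr z = 2 powr z * real n powr z" by (simp add: powr_mult)
    ultimately show ?thesis by simp
  qed
  show ?thesis
  proof (intro exI conjI allI)
    show "1 / (K1 * 2 powr z) > 0" using K1 by simp
    show "K2 > 0" by fact
    fix n
    have fp: "fact n > (0::real)" by simp
    have "Gamma_series z n = fact n * exp (z * ln (real n)) / pochhammer z (n+1)"
      by (simp add: Gamma_series_def)
    with K1(2)[of n] pp[of "n+1"] have A: "fact n * exp (z * ln (real n)) / pochhammer z (n+1) \<le> K1"
      by simp
    have "rGamma_series z n = pochhammer z (n+1) / (fact n * exp (z * ln (real n)))"
      by (simp add: rGamma_series_def)
    with K2(2)[of n] pp[of "n+1"] have B: "pochhammer z (n+1) / (fact n * exp (z * ln (real n))) \<le> K2"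
      by simp
    from A have "exp (z * ln (real n)) \<le> K1 * (pochhammer z (n+1) / fact n)"
      using pp[of "n+1"] fp by (simp add: field_simps)
    with e2[of n] have "(real n + 1) powr z \<le> 2 powr z * K1 * (pochhammer z (n+1) / fact n)"
      by (smt (verit) mult.assoc mult_left_mono powr_ge_zero)
    then show "1 / (K1 * 2 powr z) * (real n + 1) powr z \<le> pochhammer z (n+1) / fact n"
      using K1 by (simp add: field_simps)
    from B have "pochhammer z (n+1) / fact n \<le> K2 * exp (z * ln (real n))"
      using fp by (simp add: field_simps)
    also have "\<dots> \<le> K2 * (real n + 1) powr z" using K2 e1 by (intro mult_left_mono) auto
    finally show "pochhammer z (n+1) / fact n \<le> K2 * (real n + 1) powr z" .
  qed
qed



definition Wr :: "real \<Rightarrow> nat \<Rightarrow> nat \<Rightarrow> real" where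
  "Wr a f L = pochhammer a f / fact f * fact L / pochhammer a (L+1)"

lemma poch_over_fact_le:
  fixes a :: real assumes a: "a > 0"
  shows "\<exists>K>0. \<forall>f. pochhammer a f / fact f \<le> K * (real f + 1) powr (a - 1)"
proof -
  obtain c1 c2 where c0: "c1 > 0" "c2 > 0" "\<forall>n. c1 * (real n + 1) powr a \<le> pochhammer a (n+1) / fact n
                \<and> pochhammer a (n+1) / fact n \<le> c2 * (real n + 1) powr a"
    using poch_asymp[OF a] by blast
  have c: "c1 > 0" "c2 > 0" "\<And>n. pochhammer a (n+1) / fact n \<le> c2 * (real n + 1) powr a"
    using c0 by auto
  define m where "m = min a 1"
  have m: "m > 0" "m \<le> a" "m \<le> 1" using a by (auto simp: m_def)
  show ?thesis
  proof (intro exI[of _ "c2 / m"] conjI allI)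
    show "c2 / m > 0" using c m by simp
    fix f
    have "m * real f \<le> real f" using m by (simp add: mult_left_le_one_le)
    then have am: "a + real f \<ge> m * (real f + 1)" using m by (simp add: algebra_simps)
    have am0: "m * (real f + 1) > 0" using m by simp
    have "pochhammer a f / fact f = (pochhammer a (f+1) / fact f) / (a + real f)"
    proof -
      have "a + real f \<noteq> 0" using a by linarith
      then have "pochhammer a (f+1) / fact f / (a + real f) = (pochhammer a f * (a + real f)) / (fact f * (a + real f))"
        by (simp add: pochhammer_Suc)
      also have "\<dots> = pochhammer a f / fact f" using \<open>a + real f \<noteq> 0\<close> by simp
      finally show ?thesis by simp
    qed
    also have "\<dots> \<le> (c2 * (real f + 1) powr a) / (m * (real f + 1))"
      by (rule frac_le) (use c(3)[of f] am am0 c in auto)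
    also have "\<dots> = c2 / m * (real f + 1) powr (a - 1)"
      using m by (simp add: powr_diff field_simps)
    finally show "pochhammer a f / fact f \<le> c2 / m * (real f + 1) powr (a - 1)" .
  qed
qed

lemma fact_over_poch_le:
  fixes a :: real assumes a: "a > 0"
  shows "\<exists>K>0. \<forall>L. fact L / pochhammer a (L+1) \<le> K * (real L + 1) powr (- a)"
proof -
  obtain c1 c2 where c0: "c1 > 0" "c2 > 0" "\<forall>n. c1 * (real n + 1) powr a \<le> pochhammer a (n+1) / fact n
                \<and> pochhammer a (n+1) / fact n \<le> c2 * (real n + 1) powr a"
    using poch_asymp[OF a] by blast
  have c: "c1 > 0" "c2 > 0" "\<And>n. c1 * (real n + 1) powr a \<le> pochhammer a (n+1) / fact n"
    using c0 by auto
  show ?thesis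
  proof (intro exI[of _ "1 / c1"] conjI allI)
    show "1 / c1 > 0" using c by simp
    fix L
    have p: "pochhammer a (L+1) > 0" using a by (simp add: pochhammer_pos)
    have q: "c1 * (real L + 1) powr a > 0" using c by simp
    have "fact L / pochhammer a (L+1) = 1 / (pochhammer a (L+1) / fact L)" by simp
    also have "\<dots> \<le> 1 / (c1 * (real L + 1) powr a)"
      using c(3)[of L] q p by (intro divide_left_mono) (auto simp: pochhammer_pos a)
    also have "\<dots> = 1 / c1 * (real L + 1) powr (- a)" by (simp add: powr_minus field_simps)
    finally show "fact L / pochhammer a (L+1) \<le> 1 / c1 * (real L + 1) powr (- a)" .
  qed
qed

lemma poch_ratio_up:
  fixes x y :: real assumes y: "y > 0" and xy: "y \<le> x"
  shows "\<exists>K>0. \<forall>n. pochhammer x n / pochhammer y n \<le> K * (real n + 1) powr (x - y)"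
proof -
  have x: "x > 0" using xy y by simp
  obtain c1 c2 where c0: "c1 > 0" "c2 > 0" "\<forall>n. c1 * (real n + 1) powr x \<le> pochhammer x (n+1) / fact n
                \<and> pochhammer x (n+1) / fact n \<le> c2 * (real n + 1) powr x"
    using poch_asymp[OF x] by blast
  have c: "c1 > 0" "c2 > 0" "\<And>n. pochhammer x (n+1) / fact n \<le> c2 * (real n + 1) powr x" using c0 by auto
  obtain d1 d2 where d0: "d1 > 0" "d2 > 0" "\<forall>n. d1 * (real n + 1) powr y \<le> pochhammer y (n+1) / fact n
                \<and> pochhammer y (n+1) / fact n \<le> d2 * (real n + 1) powr y"
    using poch_asymp[OF y] by blast
  have d: "d1 > 0" "d2 > 0" "\<And>n. d1 * (real n + 1) powr y \<le> pochhammer y (n+1) / fact n" using d0 by auto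
  show ?thesis
  proof (intro exI[of _ "max 1 (c2 / d1)"] conjI allI)
    show "max 1 (c2 / d1) > 0" by simp
    fix n
    show "pochhammer x n / pochhammer y n \<le> max 1 (c2 / d1) * (real n + 1) powr (x - y)"
    proof (cases n)
      case 0 then show ?thesis by (simp add: ge_one_powr_ge_zero xy)
    next
      case (Suc m)
      have py: "pochhammer y (m+1) / fact m > 0" using y by (simp add: pochhammer_pos)
      have "pochhammer x n / pochhammer y n = (pochhammer x (m+1) / fact m) / (pochhammer y (m+1) / fact m)"
        using Suc by simp
      also have "\<dots> \<le> (c2 * (real m + 1) powr x) / (d1 * (real m + 1) powr y)"
        by (rule frac_le) (use c(3)[of m] d(3)[of m] py d c in auto)
      also have "\<dots> = c2 / d1 * (real m + 1) powr (x - y)" by (simp add: powr_diff)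
      also have "\<dots> \<le> max 1 (c2 / d1) * (real n + 1) powr (x - y)"
        using Suc xy by (intro mult_mono powr_mono2) auto
      finally show ?thesis .
    qed
  qed
qed

lemma poch_ratio_down:
  fixes x y :: real assumes y: "y > 0" and xy: "y \<le> x"
  shows "\<exists>K>0. \<forall>m. pochhammer y (m+1) / pochhammer x (m+1) \<le> K * (real m + 1) powr (y - x)"
proof -
  have x: "x > 0" using xy y by simp
  obtain c1 c2 where c0: "c1 > 0" "c2 > 0" "\<forall>n. c1 * (real n + 1) powr x \<le> pochhammer x (n+1) / fact n
                \<and> pochhammer x (n+1) / fact n \<le> c2 * (real n + 1) powr x"
    using poch_asymp[OF x] by blast
  have c: "c1 > 0" "c2 > 0" "\<And>n. c1 * (real n + 1) powr x \<le> pochhammer x (n+1) / fact n" using c0 by auto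
  obtain d1 d2 where d0: "d1 > 0" "d2 > 0" "\<forall>n. d1 * (real n + 1) powr y \<le> pochhammer y (n+1) / fact n
                \<and> pochhammer y (n+1) / fact n \<le> d2 * (real n + 1) powr y"
    using poch_asymp[OF y] by blast
  have d: "d1 > 0" "d2 > 0" "\<And>n. pochhammer y (n+1) / fact n \<le> d2 * (real n + 1) powr y" using d0 by auto
  show ?thesis
  proof (intro exI[of _ "d2 / c1"] conjI allI)
    show "d2 / c1 > 0" using c d by simp
    fix m
    have "pochhammer y (m+1) / pochhammer x (m+1) = (pochhammer y (m+1) / fact m) / (pochhammer x (m+1) / fact m)"
      by simp
    also have "\<dots> \<le> (d2 * (real m + 1) powr y) / (c1 * (real m + 1) powr x)"
      by (rule frac_le) (use c(3)[of m] d(3)[of m] d c in auto)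
    also have "\<dots> = d2 / c1 * (real m + 1) powr (y - x)" by (simp add: powr_diff)
    finally show "pochhammer y (m+1) / pochhammer x (m+1) \<le> d2 / c1 * (real m + 1) powr (y - x)" .
  qed
qed


lemma Pt_eq:
  fixes b t :: real assumes b: "b > 0" and t: "t \<ge> 0" and fL: "f < L"
  shows "(\<Prod>p\<in>{f<..<L}. 1 + t / (real p + b)) =
     pochhammer (b + t) L / pochhammer b L * (pochhammer b (f+1) / pochhammer (b+t) (f+1))"
proof -
  define m where "m = L - (f+1)"
  have L: "L = (f+1) + m" using fL by (simp add: m_def)
  have "{f<..<L} = (\<lambda>i. i + (f+1)) ` {0..<m}"
  proof (intro set_eqI iffI)
    fix x assume "x \<in> {f<..<L}"
    then have "x = (x - (f+1)) + (f+1)" "x - (f+1) \<in> {0..<m}" using L by auto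
    then show "x \<in> (\<lambda>i. i + (f+1)) ` {0..<m}" by blast
  qed (use L in auto)
  hence "(\<Prod>p\<in>{f<..<L}. 1 + t / (real p + b)) = (\<Prod>i\<in>{0..<m}. 1 + t / (real (i + (f+1)) + b))"
    by (simp add: prod.reindex inj_on_def)
  also have "\<dots> = (\<Prod>i\<in>{0..<m}. ((b + t + real (f+1)) + real i) / ((b + real (f+1)) + real i))"
    using b t by (intro prod.cong refl) (simp add: field_simps)
  also have "\<dots> = pochhammer (b + t + real (f+1)) m / pochhammer (b + real (f+1)) m"
    by (simp add: pochhammer_prod prod_dividef)
  also have "\<dots> = pochhammer (b + t) L / pochhammer b L * (pochhammer b (f+1) / pochhammer (b+t) (f+1))"
  proof -
    have e1: "pochhammer (b+t) L = pochhammer (b+t) (f+1) * pochhammer (b + t + real (f+1)) m"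
      unfolding L by (rule pochhammer_product')
    have e2: "pochhammer b L = pochhammer b (f+1) * pochhammer (b + real (f+1)) m"
      unfolding L by (rule pochhammer_product')
    have p1: "pochhammer (b+t) (f+1) > 0" "pochhammer b (f+1) > 0" "pochhammer (b + real (f+1)) m > 0"
      using b t by (auto intro!: pochhammer_pos)
    show ?thesis unfolding e1 e2 using p1 by (simp add: field_simps)
  qed
  finally show ?thesis .
qed



lemma inv_shift_le:
  fixes b :: real assumes b: "b > 0"
  shows "1 / (real n + b) \<le> (1 / min b 1) * (real n + 1) powr (-1)"
proof -
  have "min b 1 * (real n + 1) \<le> real n + b"
  proof -
    have "min b 1 * real n \<le> real n" by (rule mult_left_le_one_le) (use b in auto)
    then show ?thesis by (simp add: algebra_simps)
  qed
  moreover have "min b 1 * (real n + 1) > 0" using b by simp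
  ultimately have "1 / (real n + b) \<le> 1 / (min b 1 * (real n + 1))"
    by (intro divide_left_mono) auto
  also have "\<dots> = (1 / min b 1) * (real n + 1) powr (-1)"
    by (simp add: powr_minus field_simps)
  finally show ?thesis .
qed

lemma HP_bound:
  fixes a b t :: real assumes b: "b > 0" and t: "t > 0" and ta: "t < a"
  shows "\<exists>C e s. 0 \<le> C \<and> e < -1 \<and> s < -1 \<and> (\<forall>f L. f < L \<longrightarrow>
     Wr a f L * (1 / (real f + b)) * (1 / (real L + b)) * (\<Prod>p\<in>{f<..<L}. 1 + t / (real p + b))
       \<le> C * (real f + 1) powr e * (real L + 1) powr s)"
proof -
  have a: "a > 0" using t ta by simp
  obtain K1 where K1: "K1 > 0" "\<And>f. pochhammer a f / fact f \<le> K1 * (real f + 1) powr (a - 1)"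
    using poch_over_fact_le[OF a] by blast
  obtain K2 where K2: "K2 > 0" "\<And>L. fact L / pochhammer a (L+1) \<le> K2 * (real L + 1) powr (- a)"
    using fact_over_poch_le[OF a] by blast
  obtain K3 where K3: "K3 > 0" "\<And>n. pochhammer (b+t) n / pochhammer b n \<le> K3 * (real n + 1) powr ((b+t) - b)"
    using poch_ratio_up[OF b, of "b+t"] t by auto
  obtain K4 where K4: "K4 > 0" "\<And>m. pochhammer b (m+1) / pochhammer (b+t) (m+1) \<le> K4 * (real m + 1) powr (b - (b+t))"
    using poch_ratio_down[OF b, of "b+t"] t by auto
  define m where "m = min b 1"
  have m: "m > 0" using b by (simp add: m_def)
  define e0 where "e0 = a - 2 - t"
  define s0 where "s0 = t - a - 1"
  define e where "e = min e0 (-3/2)"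
  define s where "s = max s0 (-3/2)"
  define C where "C = K1 * K2 * (1/m) * (1/m) * K3 * K4"
  have C0: "0 \<le> C" using K1 K2 K3 K4 m by (simp add: C_def)
  have e1: "e < -1" by (simp add: e_def)
  have s1: "s < -1" using ta by (simp add: s_def s0_def)
  have main: "Wr a f L * (1 / (real f + b)) * (1 / (real L + b)) * (\<Prod>p\<in>{f<..<L}. 1 + t / (real p + b))
       \<le> C * (real f + 1) powr e * (real L + 1) powr s" if fL: "f < L" for f L
  proof -
    define X where "X = real f + 1"
    define Y where "Y = real L + 1"
    have X: "X \<ge> 1" and Y: "Y \<ge> 1" and XY: "X \<le> Y" using fL by (auto simp: X_def Y_def)
    have pa: "pochhammer a n > 0" for n using a by (simp add: pochhammer_pos)
    have W: "Wr a f L \<le> (K1 * X powr (a - 1)) * (K2 * Y powr (- a))"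
    proof -
      have "Wr a f L = (pochhammer a f / fact f) * (fact L / pochhammer a (L+1))"
        by (simp add: Wr_def)
      also have "\<dots> \<le> (K1 * X powr (a - 1)) * (K2 * Y powr (- a))"
        using K1 K2 pa[of "Suc L"] pa[of f] unfolding X_def Y_def by (intro mult_mono) auto
      finally show ?thesis .
    qed
    have G1: "1 / (real f + b) \<le> (1/m) * X powr (-1)"
      using inv_shift_le[OF b, of f] by (simp add: m_def X_def)
    have G2: "1 / (real L + b) \<le> (1/m) * Y powr (-1)"
      using inv_shift_le[OF b, of L] by (simp add: m_def Y_def)
    have P: "(\<Prod>p\<in>{f<..<L}. 1 + t / (real p + b)) \<le> (K3 * Y powr t) * (K4 * X powr (- t))"
    proof -
      have pb: "pochhammer b n > 0" "pochhammer (b+t) n > 0" for n using b t by (auto intro!: pochhammer_pos)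
      have "(\<Prod>p\<in>{f<..<L}. 1 + t / (real p + b)) =
          pochhammer (b + t) L / pochhammer b L * (pochhammer b (f+1) / pochhammer (b+t) (f+1))"
        using Pt_eq[OF b _ fL, of t] t by simp
      also have "\<dots> \<le> (K3 * Y powr t) * (K4 * X powr (- t))"
        using K3 K4(2)[of f] pb(1)[of "Suc f"] pb(2)[of "Suc f"] unfolding X_def Y_def
        by (intro mult_mono) (auto intro!: divide_nonneg_pos less_imp_le)
      finally show ?thesis .
    qed
    have nn: "0 \<le> Wr a f L" "0 \<le> 1 / (real f + b)" "0 \<le> 1 / (real L + b)"
      using pa[of f] pa[of "Suc L"] b by (auto simp: Wr_def intro!: divide_nonneg_pos mult_nonneg_nonneg less_imp_le)
    have "Wr a f L * (1 / (real f + b)) * (1 / (real L + b)) * (\<Prod>p\<in>{f<..<L}. 1 + t / (real p + b))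
       \<le> ((K1 * X powr (a - 1)) * (K2 * Y powr (- a))) * ((1/m) * X powr (-1)) * ((1/m) * Y powr (-1))
          * ((K3 * Y powr t) * (K4 * X powr (- t)))"
      using W G1 G2 P nn K1 K2 m b t
      by (intro mult_mono) (auto intro!: mult_nonneg_nonneg prod_nonneg add_nonneg_nonneg divide_nonneg_pos simp del: divide_le_eq_1)
    also have "\<dots> = C * (X powr (a - 1) * X powr (-1) * X powr (-t)) * (Y powr (- a) * Y powr (-1) * Y powr t)"
      unfolding C_def by (simp only: ac_simps)
    also have "X powr (a - 1) * X powr (-1) * X powr (-t) = X powr e0"
    proof -
      have "X powr e0 = X powr ((a - 1) + (-1) + (-t))" by (simp add: e0_def)
      also have "\<dots> = X powr (a - 1) * X powr (-1) * X powr (-t)" by (simp only: powr_add)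
      finally show ?thesis by simp
    qed
    also have "Y powr (- a) * Y powr (-1) * Y powr t = Y powr s0"
    proof -
      have "s0 = (- a) + (-1) + t" by (simp add: s0_def)
      then have "Y powr s0 = Y powr ((- a) + (-1) + t)" by simp
      also have "\<dots> = Y powr (- a) * Y powr (-1) * Y powr t" by (simp only: powr_add)
      finally show ?thesis by simp
    qed
    also have "C * X powr e0 * Y powr s0 \<le> C * X powr e * Y powr s"
    proof -
      have "X powr e0 = X powr e * X powr (e0 - e)" by (simp add: powr_add[symmetric])
      also have "\<dots> \<le> X powr e * Y powr (e0 - e)"
        using X XY by (intro mult_left_mono powr_mono2) (auto simp: e_def)
      finally have 1: "X powr e0 \<le> X powr e * Y powr (e0 - e)" .
      have 2: "Y powr (e0 - e) * Y powr s0 \<le> Y powr s"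
      proof -
        have "Y powr (e0 - e) * Y powr s0 = Y powr (e0 - e + s0)" by (simp add: powr_add[symmetric])
        also have "\<dots> \<le> Y powr s"
          using Y by (intro powr_mono) (auto simp: e_def s_def e0_def s0_def)
        finally show ?thesis .
      qed
      have "C * X powr e0 * Y powr s0 \<le> C * (X powr e * Y powr (e0 - e)) * Y powr s0"
        using 1 C0 by (intro mult_right_mono mult_left_mono) auto
      also have "\<dots> = C * X powr e * (Y powr (e0 - e) * Y powr s0)" by simp
      also have "\<dots> \<le> C * X powr e * Y powr s"
        using 2 C0 by (intro mult_left_mono) auto
      finally show ?thesis .
    qed
    finally show ?thesis by (simp add: X_def Y_def)
  qed
  show ?thesis using C0 e1 s1 main by (intro exI[of _ C] exI[of _ e] exI[of _ s]) auto
qed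



definition Srt :: "nat \<Rightarrow> nat list set" where
  "Srt N = {ms. length ms = N \<and> sorted_wrt (<) ms}"

definition U :: "real \<Rightarrow> real \<Rightarrow> nat list \<Rightarrow> real" where
  "U a b ms = Wr a (hd ms) (last ms) * (\<Prod>j<length ms. 1 / (real (ms ! j) + b))"

lemma srt_bounds:
  assumes "ms \<in> Srt N" "N \<ge> 1" "x \<in> set ms"
  shows "hd ms \<le> x" "x \<le> last ms"
proof -
  have ms: "length ms = N" "sorted_wrt (<) ms" using assms by (auto simp: Srt_def)
  have ne: "ms \<noteq> []" using ms assms by auto
  obtain j where j: "j < N" "x = ms ! j" using assms(3) ms by (auto simp: in_set_conv_nth)
  show "hd ms \<le> x"
  proof (cases "j = 0")
    case True then show ?thesis using j ne by (simp add: hd_conv_nth)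
  next
    case False then show ?thesis using j ne ms sorted_wrt_nth_less[OF ms(2), of 0 j]
      by (simp add: hd_conv_nth)
  qed
  show "x \<le> last ms"
  proof (cases "j = N - 1")
    case True then show ?thesis using j ne ms by (simp add: last_conv_nth)
  next
    case False then have "j < N - 1" using j by simp
    then show ?thesis using j ne ms sorted_wrt_nth_less[OF ms(2), of j "N - 1"]
      by (simp add: last_conv_nth)
  qed
qed

lemma srt_hd_less_last:
  assumes "ms \<in> Srt N" "N \<ge> 2"
  shows "hd ms < last ms"
proof -
  have ms: "length ms = N" "sorted_wrt (<) ms" using assms by (auto simp: Srt_def)
  have ne: "ms \<noteq> []" using ms assms by auto
  show ?thesis using sorted_wrt_nth_less[OF ms(2), of 0 "N - 1"] ms assms ne
    by (simp add: hd_conv_nth last_conv_nth)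
qed

lemma prod_nth_set:
  assumes "distinct ms"
  shows "(\<Prod>j<length ms. g (ms ! j)) = (\<Prod>p\<in>set ms. g p)"
proof -
  have "set ms = (nth ms) ` {..<length ms}" by (auto simp: in_set_conv_nth image_iff)
  moreover have "inj_on (nth ms) {..<length ms}" using assms by (intro inj_on_nth) auto
  ultimately show ?thesis by (simp add: prod.reindex)
qed

lemma Wr_nonneg: "a > 0 \<Longrightarrow> 0 \<le> Wr a f L"
  unfolding Wr_def by (intro mult_nonneg_nonneg divide_nonneg_pos) (auto simp: pochhammer_pos less_imp_le)

lemma U_nonneg: "a > 0 \<Longrightarrow> b > 0 \<Longrightarrow> 0 \<le> U a b ms"
  unfolding U_def by (intro mult_nonneg_nonneg Wr_nonneg prod_nonneg) auto

lemma Wr_diag: "a > 0 \<Longrightarrow> Wr a m m = 1 / (a + real m)"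
proof -
  assume a: "a > 0"
  have "pochhammer a m > 0" "fact m > (0::real)" "a + real m > 0" using a by (auto simp: pochhammer_pos)
  then have "Wr a m m = (pochhammer a m * fact m) / (fact m * (pochhammer a m * (a + real m)))"
    unfolding Wr_def by (simp add: pochhammer_Suc)
  also have "\<dots> = (pochhammer a m * fact m) / ((pochhammer a m * fact m) * (a + real m))"
    by (simp add: mult_ac)
  also have "\<dots> = 1 / (a + real m)" using \<open>pochhammer a m > 0\<close> \<open>fact m > 0\<close>
    by (intro nonzero_divide_mult_cancel_left) simp
  finally show ?thesis .
qed

lemma summable_shift_powr:
  assumes "e < -1" shows "summable (\<lambda>n. (real n + 1) powr e)"
proof -
  have "summable (\<lambda>n. real n powr e)" using assms summable_real_powr_iff by blast
  then have "summable (\<lambda>n. real (Suc n) powr e)" by (subst summable_Suc_iff)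
  then show ?thesis by (simp add: add.commute)
qed



lemma fin_bound_ge2:
  fixes a b t C0 e s :: real
  assumes b: "b > 0" and t: "t > 0" and ta: "t < a" and C0: "C0 \<ge> 0" and e: "e < -1" and s: "s < -1"
    and main: "\<And>f L. f < L \<Longrightarrow> Wr a f L * (1 / (real f + b)) * (1 / (real L + b)) * (\<Prod>p\<in>{f<..<L}. 1 + t / (real p + b))
       \<le> C0 * (real f + 1) powr e * (real L + 1) powr s"
    and N: "N \<ge> 2" and F: "finite F" "F \<subseteq> Srt N"
  shows "sum (U a b) F \<le> (1/t)^(N-2) * (C0 * suminf (\<lambda>n. (real n + 1) powr e) * suminf (\<lambda>n. (real n + 1) powr s))"
proof -
  have a: "a > 0" using t ta by simp
  define M0 where "M0 = Max (insert 0 (\<Union>ms\<in>F. set ms))"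
  have finU: "finite (insert 0 (\<Union>ms\<in>F. set ms))" using F by auto
  have M0: "x \<le> M0" if "ms \<in> F" "x \<in> set ms" for ms x
    unfolding M0_def using finU that by (intro Max_ge) auto
  define g where "g p = 1 / (real p + b)" for p :: nat
  define \<phi> where "\<phi> ms = ((hd ms, last ms), set ms - {hd ms, last ms})" for ms :: "nat list"
  define h where "h = (\<lambda>((f::nat, L::nat), T::nat set). Wr a f L * g f * g L * ((1/t)^(N-2) * (\<Prod>p\<in>T. t / (real p + b))))"
  define P where "P = {(f, L). f < L \<and> L \<le> M0}"
  define Q where "Q = Sigma P (\<lambda>(f, L). Pow {f<..<L})"
  have finP: "finite P"
    by (rule finite_subset[of _ "{..M0} \<times> {..M0}"]) (auto simp: P_def)
  have finQ: "finite Q" unfolding Q_def using finP by (intro finite_SigmaI) auto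
  have gpos: "g p > 0" for p using b by (simp add: g_def)
  have hnn: "h x \<ge> 0" for x
    using t b by (auto simp: h_def split: prod.splits intro!: mult_nonneg_nonneg Wr_nonneg[OF a] prod_nonneg
        less_imp_le[OF gpos])
  have eqU: "U a b ms = h (\<phi> ms)" if ms: "ms \<in> F" for ms
  proof -
    have msS: "ms \<in> Srt N" using ms F by auto
    have len: "length ms = N" and sw: "sorted_wrt (<) ms" using msS by (auto simp: Srt_def)
    have dist: "distinct ms" using sw by (simp add: strict_sorted_iff)
    have ne: "ms \<noteq> []" using len N by auto
    have hl: "hd ms < last ms" using srt_hd_less_last[OF msS N] .
    define T where "T = set ms - {hd ms, last ms}"
    have setms: "set ms = insert (hd ms) (insert (last ms) T)" using ne by (auto simp: T_def)
    have cardT: "card T = N - 2"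
    proof -
      have "card (set ms) = N" using dist len by (simp add: distinct_card)
      moreover have "hd ms \<notin> insert (last ms) T" "last ms \<notin> T" using hl by (auto simp: T_def)
      moreover have "finite T" by (simp add: T_def)
      ultimately show ?thesis using setms by (simp add: card_insert_if)
    qed
    have "U a b ms = Wr a (hd ms) (last ms) * (\<Prod>p\<in>set ms. g p)"
      unfolding U_def g_def using prod_nth_set[OF dist, of "\<lambda>p. 1 / (real p + b)"] by simp
    also have "(\<Prod>p\<in>set ms. g p) = g (hd ms) * (g (last ms) * (\<Prod>p\<in>T. g p))"
      using hl by (subst setms) (simp add: T_def)
    also have "(\<Prod>p\<in>T. g p) = (1/t)^(N-2) * (\<Prod>p\<in>T. t / (real p + b))"
    proof -
      have "(\<Prod>p\<in>T. t / (real p + b)) = t ^ card T * (\<Prod>p\<in>T. g p)"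
        by (simp add: g_def prod.distrib divide_inverse)
      then show ?thesis using t cardT by (simp add: power_one_over field_simps)
    qed
    finally show ?thesis by (simp add: h_def \<phi>_def T_def mult_ac)
  qed
  have inj: "inj_on \<phi> F"
  proof (rule inj_onI)
    fix x y assume x: "x \<in> F" and y: "y \<in> F" and xy: "\<phi> x = \<phi> y"
    have xs: "x \<in> Srt N" "y \<in> Srt N" using x y F by auto
    have "x \<noteq> []" "y \<noteq> []" using xs N by (auto simp: Srt_def)
    then have ex: "set x = insert (hd x) (insert (last x) (set x - {hd x, last x}))"
      and ey: "set y = insert (hd y) (insert (last y) (set y - {hd y, last y}))" by auto
    from xy have "hd x = hd y" "last x = last y" "set x - {hd x, last x} = set y - {hd y, last y}"
      unfolding \<phi>_def by auto
    then have "set x = set y" using ex ey by metis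
    then show "x = y" using xs by (intro sorted_distinct_set_unique) (auto simp: Srt_def strict_sorted_iff)
  qed
  have sub: "\<phi> ` F \<subseteq> Q"
  proof
    fix z assume "z \<in> \<phi> ` F"
    then obtain ms where ms: "ms \<in> F" "z = \<phi> ms" by auto
    have msS: "ms \<in> Srt N" using ms F by auto
    have ne: "ms \<noteq> []" using msS N by (auto simp: Srt_def)
    have hl: "hd ms < last ms" using srt_hd_less_last[OF msS N] .
    have "last ms \<le> M0" using M0[OF ms(1) last_in_set[OF ne]] .
    moreover have "set ms - {hd ms, last ms} \<subseteq> {hd ms<..<last ms}"
    proof
      fix x assume x: "x \<in> set ms - {hd ms, last ms}"
      then have "hd ms \<le> x" "x \<le> last ms" "x \<noteq> hd ms" "x \<noteq> last ms"
        using srt_bounds[OF msS, of x] N by auto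
      then show "x \<in> {hd ms<..<last ms}" by auto
    qed
    ultimately show "z \<in> Q" using ms hl by (simp add: Q_def P_def \<phi>_def)
  qed
  have "sum (U a b) F = sum (h \<circ> \<phi>) F" using eqU by (intro sum.cong) auto
  also have "\<dots> = sum h (\<phi> ` F)" using inj by (simp add: sum.reindex)
  also have "\<dots> \<le> sum h Q" using sub finQ hnn by (intro sum_mono2) auto
  also have "sum h Q = (\<Sum>(f, L)\<in>P. \<Sum>T\<in>Pow {f<..<L}. h ((f, L), T))"
  proof -
    have "(\<Sum>x\<in>P. \<Sum>T\<in>(case x of (f,L) \<Rightarrow> Pow {f<..<L}). h (x,T)) = (\<Sum>(x,T)\<in>Q. h (x,T))"
      unfolding Q_def by (rule sum.Sigma) (use finP in auto)
    then show ?thesis by (simp add: case_prod_beta')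
  qed
  also have "\<dots> = (\<Sum>(f, L)\<in>P. Wr a f L * g f * g L * ((1/t)^(N-2) * (\<Prod>p\<in>{f<..<L}. 1 + t / (real p + b))))"
  proof (intro sum.cong refl, clarify)
    fix f L
    have "(\<Prod>p\<in>{f<..<L}. t / (real p + b) + 1) = (\<Sum>X\<in>Pow {f<..<L}. (\<Prod>p\<in>X. t / (real p + b)) * (\<Prod>p\<in>{f<..<L} - X. 1))"
      by (rule prod_add) simp
    then have "(\<Prod>p\<in>{f<..<L}. 1 + t / (real p + b)) = (\<Sum>X\<in>Pow {f<..<L}. (\<Prod>p\<in>X. t / (real p + b)))"
      by (simp add: add.commute)
    then show "(\<Sum>T\<in>Pow {f<..<L}. h ((f, L), T)) = Wr a f L * g f * g L * ((1/t)^(N-2) * (\<Prod>p\<in>{f<..<L}. 1 + t / (real p + b)))"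
      by (simp add: h_def sum_distrib_left)
  qed
  also have "\<dots> \<le> (\<Sum>(f, L)\<in>P. (1/t)^(N-2) * (C0 * (real f + 1) powr e * (real L + 1) powr s))"
  proof (intro sum_mono, clarify)
    fix f L assume "(f, L) \<in> P"
    then have fL: "f < L" by (simp add: P_def)
    have "Wr a f L * g f * g L * ((1/t)^(N-2) * (\<Prod>p\<in>{f<..<L}. 1 + t / (real p + b)))
        = (1/t)^(N-2) * (Wr a f L * (1 / (real f + b)) * (1 / (real L + b)) * (\<Prod>p\<in>{f<..<L}. 1 + t / (real p + b)))"
      by (simp add: g_def)
    also have "\<dots> \<le> (1/t)^(N-2) * (C0 * (real f + 1) powr e * (real L + 1) powr s)"
      using main[OF fL] t by (intro mult_left_mono) auto
    finally show "Wr a f L * g f * g L * ((1/t)^(N-2) * (\<Prod>p\<in>{f<..<L}. 1 + t / (real p + b)))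
        \<le> (1/t)^(N-2) * (C0 * (real f + 1) powr e * (real L + 1) powr s)" .
  qed
  also have "\<dots> \<le> (\<Sum>(f, L)\<in>{..M0} \<times> {..M0}. (1/t)^(N-2) * (C0 * (real f + 1) powr e * (real L + 1) powr s))"
    using t C0 by (intro sum_mono2) (auto simp: P_def)
  also have "\<dots> = (1/t)^(N-2) * (C0 * ((\<Sum>f\<le>M0. (real f + 1) powr e) * (\<Sum>L\<le>M0. (real L + 1) powr s)))"
  proof -
    have "(\<Sum>(f, L)\<in>{..M0} \<times> {..M0}. (1/t)^(N-2) * (C0 * (real f + 1) powr e * (real L + 1) powr s))
        = (1/t)^(N-2) * (C0 * (\<Sum>f\<le>M0. \<Sum>L\<le>M0. (real f + 1) powr e * (real L + 1) powr s))"
      unfolding sum.cartesian_product[symmetric] sum_distrib_left by (simp add: mult_ac)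
    then show ?thesis by (simp add: sum_product)
  qed
  also have "\<dots> \<le> (1/t)^(N-2) * (C0 * (suminf (\<lambda>n. (real n + 1) powr e) * suminf (\<lambda>n. (real n + 1) powr s)))"
    using t C0 summable_shift_powr[OF e] summable_shift_powr[OF s]
    by (intro mult_left_mono mult_mono sum_le_suminf sum_nonneg suminf_nonneg) auto
  finally show ?thesis by (simp add: mult_ac)
qed



lemma fin_bound_1:
  fixes a b :: real
  assumes b: "b > 0" and ba: "b \<le> a" and F: "finite F" "F \<subseteq> Srt 1"
  shows "sum (U a b) F \<le> (1 / min b 1)^2 * suminf (\<lambda>n. (real n + 1) powr (-2))"
proof -
  have a: "a > 0" using b ba by simp
  define c where "c = 1 / min b 1"
  have c: "c > 0" using b by (simp add: c_def)
  have one: "ms = [hd ms]" if "ms \<in> Srt 1" for ms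
    using that by (cases ms) (auto simp: Srt_def)
  have inj: "inj_on hd F" using F one by (metis inj_onI subsetD)
  have "U a b ms = (1 / (real (hd ms) + a)) * (1 / (real (hd ms) + b))" if "ms \<in> F" for ms
  proof -
    have "ms = [hd ms]" using one that F by auto
    then show ?thesis unfolding U_def by (metis (no_types, lifting) Wr_diag[OF a] One_nat_def add.commute
          last.simps length_Cons lessThan_0 list.sel(1) list.size(3) nth_Cons_0 prod.lessThan_Suc
          mult_1 lessThan_0 prod.empty)
  qed
  then have "sum (U a b) F = sum (\<lambda>m. (1 / (real m + a)) * (1 / (real m + b))) (hd ` F)"
    using inj by (simp add: sum.reindex)
  also have "\<dots> \<le> sum (\<lambda>m. c^2 * (real m + 1) powr (-2)) (hd ` F)"
  proof (intro sum_mono)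
    fix m
    have 1: "1 / (real m + a) \<le> 1 / (real m + b)" using b ba by (intro divide_left_mono) auto
    have 2: "1 / (real m + b) \<le> c * (real m + 1) powr (-1)" using inv_shift_le[OF b, of m] by (simp add: c_def)
    have "(1 / (real m + a)) * (1 / (real m + b)) \<le> (c * (real m + 1) powr (-1)) * (c * (real m + 1) powr (-1))"
    proof -
      have 3: "1 / (real m + a) \<le> c * (real m + 1) powr (-1)" using 1 2 by linarith
      have 4: "0 \<le> c * (real m + 1) powr (-1)" using c by simp
      show ?thesis using 2 3 4 a b by (intro mult_mono) auto
    qed
    also have "\<dots> = c^2 * ((real m + 1) powr (-1) * (real m + 1) powr (-1))" by (simp add: power2_eq_square)
    also have "(real m + 1) powr (-1) * (real m + 1) powr (-1) = (real m + 1) powr (-2)"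
    proof -
      have "(real m + 1) powr (-2) = (real m + 1) powr ((-1) + (-1))" by simp
      also have "\<dots> = (real m + 1) powr (-1) * (real m + 1) powr (-1)" by (simp only: powr_add)
      finally show ?thesis by simp
    qed
    finally show "(1 / (real m + a)) * (1 / (real m + b)) \<le> c^2 * (real m + 1) powr (-2)" .
  qed
  also have "\<dots> = c^2 * sum (\<lambda>m. (real m + 1) powr (-2)) (hd ` F)" by (simp add: sum_distrib_left)
  also have "\<dots> \<le> c^2 * suminf (\<lambda>n. (real n + 1) powr (-2))"
    using summable_shift_powr[of "-2"] F by (intro mult_left_mono sum_le_suminf) auto
  finally show ?thesis by (simp add: c_def)
qed

lemma Phi:
  fixes a b t :: real
  assumes b: "b > 0" and ba: "b \<le> a" and t: "t > 0" and ta: "t < a"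
  shows "\<exists>C\<ge>0. \<forall>N\<ge>1. U a b summable_on Srt N \<and> infsum (U a b) (Srt N) \<le> C * (1/t)^N"
proof -
  have a: "a > 0" using t ta by simp
  obtain C0 e s where H: "0 \<le> C0" "e < -1" "s < -1" "\<forall>f L. f < L \<longrightarrow>
     Wr a f L * (1 / (real f + b)) * (1 / (real L + b)) * (\<Prod>p\<in>{f<..<L}. 1 + t / (real p + b))
       \<le> C0 * (real f + 1) powr e * (real L + 1) powr s"
    using HP_bound[OF b t ta] by blast
  define Cb where "Cb = C0 * suminf (\<lambda>n. (real n + 1) powr e) * suminf (\<lambda>n. (real n + 1) powr s)"
  define B1 where "B1 = (1 / min b 1)^2 * suminf (\<lambda>n. (real n + 1) powr (-2::real))"
  have Cb: "Cb \<ge> 0" unfolding Cb_def using H summable_shift_powr[OF H(2)] summable_shift_powr[OF H(3)]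
    by (intro mult_nonneg_nonneg suminf_nonneg) auto
  have B1: "B1 \<ge> 0" unfolding B1_def using summable_shift_powr[of "-2"]
    by (intro mult_nonneg_nonneg suminf_nonneg) auto
  define C where "C = max (Cb * t^2) (B1 * t)"
  have fin: "sum (U a b) F \<le> C * (1/t)^N" if "N \<ge> 1" "finite F" "F \<subseteq> Srt N" for N F
  proof (cases "N = 1")
    case True
    then have "sum (U a b) F \<le> B1" using fin_bound_1[OF b ba that(2)] that by (simp add: B1_def)
    also have "\<dots> = (B1 * t) * (1/t)^N" using True t by simp
    also have "\<dots> \<le> C * (1/t)^N" using t by (intro mult_right_mono) (auto simp: C_def)
    finally show ?thesis .
  next
    case False
    then have N2: "N \<ge> 2" using that by simp
    have "sum (U a b) F \<le> (1/t)^(N-2) * Cb"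
      using fin_bound_ge2[OF b t ta H(1) H(2) H(3) _ N2 that(2,3)] H(4) by (simp add: Cb_def mult_ac)
    also have "\<dots> = (Cb * t^2) * (1/t)^N"
    proof -
      have "N = (N - 2) + 2" using N2 by simp
      then have "(1/t)^N = (1/t)^(N-2) * (1/t)^2" by (metis power_add)
      then show ?thesis using t by (simp add: power_one_over field_simps)
    qed
    also have "\<dots> \<le> C * (1/t)^N" using t by (intro mult_right_mono) (auto simp: C_def)
    finally show ?thesis .
  qed
  have "Cb * t^2 \<ge> 0" using Cb by simp
  then have "C \<ge> 0" unfolding C_def by linarith
  moreover have "U a b summable_on Srt N \<and> infsum (U a b) (Srt N) \<le> C * (1/t)^N" if N: "N \<ge> 1" for N
  proof
    show sm: "U a b summable_on Srt N"
      by (rule nonneg_bdd_above_summable_on) (use U_nonneg[OF a b] fin[OF N] in \<open>auto simp: bdd_above_def\<close>)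
    show "infsum (U a b) (Srt N) \<le> C * (1/t)^N"
      by (rule infsum_le_finite_sums[OF sm]) (use fin[OF N] in auto)
  qed
  ultimately show ?thesis by blast
qed



definition TRa :: "nat list \<Rightarrow> real \<Rightarrow> nat list \<Rightarrow> real" where
  "TRa K a ms = Wr a (hd ms) (last ms) * (\<Prod>j<length K - 1. 1 / (real (ms ! j) + a) ^ (K ! j))
      * (1 / (real (last ms) + a) ^ (last K - 1))"

definition Vb :: "real \<Rightarrow> nat list \<Rightarrow> real" where
  "Vb a ms = Wr a (hd ms) (last ms) * (\<Prod>j<length ms. 1 / (real (ms ! j) + a))"

lemma norm_poch_ge:
  fixes z :: complex assumes "Re z \<ge> c" "c > 0"
  shows "norm (pochhammer z k) \<ge> pochhammer c k"
proof -
  have "pochhammer c k = (\<Prod>i<k. c + real i)" by (simp add: pochhammer_prod atLeast0LessThan)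
  also have "\<dots> \<le> (\<Prod>i<k. norm (z + of_nat i))"
  proof (intro prod_mono conjI)
    fix i show "0 \<le> c + real i" using assms by simp
    have "c + real i \<le> Re (z + of_nat i)" using assms by simp
    also have "\<dots> \<le> norm (z + of_nat i)" by (rule complex_Re_le_cmod)
    finally show "c + real i \<le> norm (z + of_nat i)" .
  qed
  also have "\<dots> = norm (pochhammer z k)" by (simp add: pochhammer_prod atLeast0LessThan prod_norm)
  finally show ?thesis .
qed

lemma poch_ratio_norm:
  fixes \<alpha> :: complex assumes a: "a > 0" "Re \<alpha> \<ge> a" and fL: "f \<le> L"
  shows "norm (pochhammer \<alpha> f / of_nat (fact f) * of_nat (fact L) / pochhammer \<alpha> (L+1)) \<le> Wr a f L"
proof -
  define k where "k = L + 1 - f"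
  have Lk: "L + 1 = f + k" using fL by (simp add: k_def)
  have e1: "pochhammer \<alpha> (L+1) = pochhammer \<alpha> f * pochhammer (\<alpha> + of_nat f) k"
    unfolding Lk by (rule pochhammer_product')
  have e2: "pochhammer a (L+1) = pochhammer a f * pochhammer (a + of_nat f) k"
    unfolding Lk by (rule pochhammer_product')
  have nz: "pochhammer \<alpha> f \<noteq> 0"
  proof
    assume "pochhammer \<alpha> f = 0"
    then have "norm (pochhammer \<alpha> f) = 0" by simp
    moreover have "norm (pochhammer \<alpha> f) \<ge> pochhammer a f" using norm_poch_ge[OF a(2) a(1)] by simp
    moreover have "pochhammer a f > 0" using a by (simp add: pochhammer_pos)
    ultimately show False by simp
  qed
  have paf: "pochhammer a f > 0" "pochhammer (a + of_nat f) k > 0" using a by (auto intro!: pochhammer_pos)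
  have ge: "norm (pochhammer (\<alpha> + of_nat f) k) \<ge> pochhammer (a + of_nat f) k"
    using a by (intro norm_poch_ge) auto
  have "pochhammer \<alpha> f / of_nat (fact f) * of_nat (fact L) / pochhammer \<alpha> (L+1)
      = of_nat (fact L) / (of_nat (fact f) * pochhammer (\<alpha> + of_nat f) k)"
    unfolding e1 using nz by (simp add: field_simps)
  then have "norm (pochhammer \<alpha> f / of_nat (fact f) * of_nat (fact L) / pochhammer \<alpha> (L+1))
      = fact L / (fact f * norm (pochhammer (\<alpha> + of_nat f) k))"
    by (simp add: norm_divide norm_mult)
  also have "\<dots> \<le> fact L / (fact f * pochhammer (a + of_nat f) k)"
  proof -
    have p0: "fact f * pochhammer (a + of_nat f) k > 0" using paf by simp
    have "fact f * pochhammer (a + of_nat f) k \<le> fact f * norm (pochhammer (\<alpha> + of_nat f) k)"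
      using ge by (intro mult_left_mono) auto
    moreover have "fact f * norm (pochhammer (\<alpha> + of_nat f) k) > 0" using calculation p0 by linarith
    ultimately show ?thesis using p0 by (intro divide_left_mono) auto
  qed
  also have "\<dots> = Wr a f L"
    unfolding Wr_def e2 using paf by (simp add: field_simps)
  finally show ?thesis .
qed

lemma Zterm_norm:
  fixes \<alpha> :: complex
  assumes a: "a > 0" "Re \<alpha> \<ge> a" and ms: "ms \<in> Srt (length K)" and K: "K \<noteq> []"
  shows "norm (Z_term K \<alpha> ms) \<le> TRa K a ms"
proof -
  have len: "length ms = length K" and sw: "sorted_wrt (<) ms" using ms by (auto simp: Srt_def)
  have ne: "ms \<noteq> []" using len K by auto
  have "length K \<ge> 1" using K by (cases K) auto
  then have hl: "hd ms \<le> last ms" using srt_bounds[OF ms, of "hd ms"] ne by auto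
  have x: "norm (of_nat m + \<alpha>) \<ge> real m + a" for m :: nat
  proof -
    have "real m + a \<le> Re (of_nat m + \<alpha>)" using a by simp
    also have "\<dots> \<le> norm (of_nat m + \<alpha>)" by (rule complex_Re_le_cmod)
    finally show ?thesis .
  qed
  have inv: "norm (1 / (of_nat m + \<alpha>) ^ k) \<le> 1 / (real m + a) ^ k" for m k
  proof -
    have "norm (1 / (of_nat m + \<alpha>) ^ k) = 1 / norm (of_nat m + \<alpha>) ^ k" by (simp add: norm_divide norm_power)
    also have "\<dots> \<le> 1 / (real m + a) ^ k" using x[of m] a by (intro divide_left_mono power_mono mult_pos_pos zero_less_power) auto
    finally show ?thesis .
  qed
  have "norm (Z_term K \<alpha> ms) = norm (pochhammer \<alpha> (hd ms) / of_nat (fact (hd ms)) * of_nat (fact (last ms)) / pochhammer \<alpha> (last ms + 1))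
      * (\<Prod>j<length K - 1. norm (1 / (of_nat (ms ! j) + \<alpha>) ^ (K ! j)))
      * norm (1 / (of_nat (last ms) + \<alpha>) ^ (last K - 1))"
    unfolding Z_term_def by (simp only: norm_mult prod_norm[symmetric])
  also have "\<dots> \<le> TRa K a ms"
    unfolding TRa_def using poch_ratio_norm[OF a hl] inv a(1)
    by (intro mult_mono prod_mono conjI) (auto intro!: mult_nonneg_nonneg prod_nonneg Wr_nonneg a less_imp_le[OF a(1)] zero_le_power add_nonneg_nonneg)
  finally show ?thesis .
qed

lemma TRa_nonneg: "a > 0 \<Longrightarrow> 0 \<le> TRa K a ms"
  unfolding TRa_def by (intro mult_nonneg_nonneg Wr_nonneg prod_nonneg) auto



definition gK :: "nat list \<Rightarrow> nat" where "gK K = sum_list (map (\<lambda>k. k - 1) K)"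

lemma Z_norm_le:
  fixes \<alpha> :: complex
  assumes a: "a > 0" "Re \<alpha> \<ge> a" and K: "K \<noteq> []" and sm: "TRa K a summable_on Srt (length K)"
  shows "norm (Z K \<alpha>) \<le> infsum (TRa K a) (Srt (length K))"
proof -
  have Zd: "Z K \<alpha> = infsum (Z_term K \<alpha>) (Srt (length K))" by (simp add: Z_def Srt_def)
  have abs: "(\<lambda>ms. norm (Z_term K \<alpha> ms)) summable_on Srt (length K)"
    by (rule summable_on_comparison_test[OF sm]) (use Zterm_norm[OF a _ K] in auto)
  have "norm (Z K \<alpha>) \<le> infsum (\<lambda>ms. norm (Z_term K \<alpha> ms)) (Srt (length K))"
    unfolding Zd by (rule norm_infsum_bound[OF abs])
  also have "\<dots> \<le> infsum (TRa K a) (Srt (length K))"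
    by (rule infsum_mono[OF abs sm]) (use Zterm_norm[OF a _ K] in auto)
  finally show ?thesis .
qed

lemma sum_list_map_nth: "sum_list (map h K) = (\<Sum>j<length K. h (K ! j))"
  by (simp add: sum_list_sum_nth atLeast0LessThan)

lemma TR_le_Vb:
  fixes a :: real
  assumes a: "a > 0" and len: "length ms = length K" and K: "K \<noteq> []"
    and pos: "\<forall>k\<in>set K. k \<ge> 1" and lastK: "last K \<ge> 2"
  shows "TRa K a ms \<le> (max 1 (1/a)) ^ gK K * Vb a ms"
proof -
  define D where "D = max 1 (1/a)"
  define N where "N = length K"
  have N: "N = Suc (N - 1)" using K by (cases K) (auto simp: N_def)
  have D1: "D \<ge> 1" by (simp add: D_def)
  have key: "1 / x ^ k \<le> (1 / x) * D ^ (k - 1)" if "x \<ge> a" "k \<ge> 1" for x k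
  proof -
    have x: "x > 0" using that a by simp
    have "1 / x \<le> 1 / a" using that a by (intro divide_left_mono) auto
    also have "\<dots> \<le> D" by (simp add: D_def)
    finally have "1 / x \<le> D" .
    then have p: "(1 / x) ^ (k - 1) \<le> D ^ (k - 1)" using x by (intro power_mono) auto
    have "1 / x ^ k = (1 / x) * (1 / x) ^ (k - 1)" using that
      by (metis One_nat_def Suc_diff_le diff_Suc_1 power_Suc power_one_over)
    also have "\<dots> \<le> (1 / x) * D ^ (k - 1)" using p x by (intro mult_left_mono) auto
    finally show ?thesis .
  qed
  have lastK': "last K = K ! (N - 1)" using K by (simp add: last_conv_nth N_def)
  have "ms \<noteq> []" using K len by auto
  then have lastms: "last ms = ms ! (N - 1)" using len by (simp add: last_conv_nth N_def)
  have xa: "real (ms ! j) + a \<ge> a" for j by simp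
  have Kj: "K ! j \<ge> 1" if "j < N" for j using pos that by (simp add: N_def)
  have P1: "(\<Prod>j<N - 1. 1 / (real (ms ! j) + a) ^ (K ! j))
      \<le> (\<Prod>j<N - 1. (1 / (real (ms ! j) + a)) * D ^ (K ! j - 1))"
    by (intro prod_mono conjI key xa Kj) (use a in auto)
  have P2: "1 / (real (last ms) + a) ^ (last K - 1) \<le> (1 / (real (last ms) + a)) * D ^ (last K - 1)"
  proof -
    have "1 / (real (last ms) + a) ^ (last K - 1) \<le> (1 / (real (last ms) + a)) * D ^ (last K - 1 - 1)"
      using lastK by (intro key) auto
    also have "\<dots> \<le> (1 / (real (last ms) + a)) * D ^ (last K - 1)"
      using D1 a by (intro mult_left_mono power_increasing) auto
    finally show ?thesis .
  qed
  have "TRa K a ms \<le> Wr a (hd ms) (last ms) * (\<Prod>j<N - 1. (1 / (real (ms ! j) + a)) * D ^ (K ! j - 1))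
      * ((1 / (real (last ms) + a)) * D ^ (last K - 1))"
    unfolding TRa_def N_def[symmetric] using P1 P2 a D1
    by (intro mult_mono) (auto intro!: mult_nonneg_nonneg Wr_nonneg prod_nonneg)
  also have "\<dots> = Wr a (hd ms) (last ms) * ((\<Prod>j<N - 1. 1 / (real (ms ! j) + a)) * (1 / (real (ms ! (N - 1)) + a)))
      * (D ^ (\<Sum>j<N - 1. K ! j - 1) * D ^ (K ! (N - 1) - 1))"
  proof -
    have "(\<Prod>j<N - 1. (1 / (real (ms ! j) + a)) * D ^ (K ! j - 1)) =
        (\<Prod>j<N - 1. 1 / (real (ms ! j) + a)) * (\<Prod>j<N - 1. D ^ (K ! j - 1))"
      by (rule prod.distrib)
    moreover have "(\<Prod>j<N - 1. D ^ (K ! j - 1)) = D ^ (\<Sum>j<N - 1. K ! j - 1)"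
      by (rule power_sum[symmetric])
    ultimately show ?thesis unfolding lastK' lastms by (simp only: mult_ac)
  qed
  also have "(\<Prod>j<N - 1. 1 / (real (ms ! j) + a)) * (1 / (real (ms ! (N - 1)) + a)) = (\<Prod>j<length ms. 1 / (real (ms ! j) + a))"
    using N len by (metis N_def prod.lessThan_Suc)
  also have "D ^ (\<Sum>j<N - 1. K ! j - 1) * D ^ (K ! (N - 1) - 1) = D ^ gK K"
  proof -
    have "(\<Sum>j<N - 1. K ! j - 1) + (K ! (N - 1) - 1) = (\<Sum>j<N. K ! j - 1)"
      using N by (metis sum.lessThan_Suc)
    also have "\<dots> = gK K" by (simp add: gK_def sum_list_map_nth N_def)
    finally show ?thesis by (metis power_add)
  qed
  finally show ?thesis by (simp add: Vb_def D_def mult_ac)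
qed

lemma Vb_le_U:
  assumes "0 < b" "b \<le> a" shows "Vb a ms \<le> U a b ms"
  unfolding Vb_def U_def using assms
  by (intro mult_left_mono prod_mono conjI Wr_nonneg) (auto intro!: divide_left_mono)

lemma Vb_nonneg: "a > 0 \<Longrightarrow> 0 \<le> Vb a ms"
  unfolding Vb_def by (intro mult_nonneg_nonneg Wr_nonneg prod_nonneg) auto



lemma nth_map2_add: "j < length K \<Longrightarrow> length e = length K \<Longrightarrow> map2 (+) K e ! j = K ! j + e ! j"
  by simp

lemma TRa_add:
  fixes a :: real
  assumes K: "K \<noteq> []" and le: "length e = length K" and lm: "length ms = length K" and lastK: "last K \<ge> 1"
  shows "TRa (map2 (+) K e) a ms = TRa K a ms * (\<Prod>j<length K. (1 / (real (ms ! j) + a)) ^ (e ! j))"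
proof -
  define N where "N = length K"
  have N: "Suc (N - 1) = N" "N > 0" using K by (cases K, auto simp: N_def)+
  have lenK': "length (map2 (+) K e) = N" using le by (simp add: N_def)
  have ne: "ms \<noteq> []" "e \<noteq> []" using K lm le by auto
  have lastK': "last K = K ! (N - 1)" using K by (simp add: last_conv_nth N_def)
  have laste: "last e = e ! (N - 1)" using ne le by (simp add: last_conv_nth N_def)
  have lastms: "last ms = ms ! (N - 1)" using ne lm by (simp add: last_conv_nth N_def)
  have last2: "last (map2 (+) K e) = last K + last e"
  proof -
    have "map2 (+) K e \<noteq> []" using lenK' N by auto
    then have "last (map2 (+) K e) = map2 (+) K e ! (N - 1)" using lenK' by (simp add: last_conv_nth)
    also have "\<dots> = K ! (N - 1) + e ! (N - 1)" using N le by (intro nth_map2_add) (auto simp: N_def)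
    finally show ?thesis using lastK' laste by simp
  qed
  have pw: "1 / x ^ (k + l) = 1 / x ^ k * (1 / x) ^ l" for x :: real and k l
    unfolding power_add power_one_over by (simp only: divide_inverse mult_1_left inverse_mult_distrib)
  have "TRa (map2 (+) K e) a ms = Wr a (hd ms) (last ms) *
      (\<Prod>j<N - 1. 1 / (real (ms ! j) + a) ^ (K ! j) * (1 / (real (ms ! j) + a)) ^ (e ! j)) *
      (1 / (real (last ms) + a) ^ (last K - 1) * (1 / (real (last ms) + a)) ^ (last e))"
  proof -
    have P: "(\<Prod>j<N - 1. 1 / (real (ms ! j) + a) ^ (map2 (+) K e ! j))
        = (\<Prod>j<N - 1. 1 / (real (ms ! j) + a) ^ (K ! j) * (1 / (real (ms ! j) + a)) ^ (e ! j))"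
    proof (intro prod.cong refl)
      fix j assume "j \<in> {..<N - 1}"
      then have m: "map2 (+) K e ! j = K ! j + e ! j" using le by (intro nth_map2_add) (auto simp: N_def)
      show "1 / (real (ms ! j) + a) ^ (map2 (+) K e ! j) = 1 / (real (ms ! j) + a) ^ (K ! j) * (1 / (real (ms ! j) + a)) ^ (e ! j)"
        unfolding m by (rule pw)
    qed
    have l: "last (map2 (+) K e) - 1 = (last K - 1) + last e" using last2 lastK by simp
    have L: "1 / (real (last ms) + a) ^ (last (map2 (+) K e) - 1) =
        1 / (real (last ms) + a) ^ (last K - 1) * (1 / (real (last ms) + a)) ^ (last e)"
      unfolding l by (rule pw)
    show ?thesis unfolding TRa_def lenK' N_def[symmetric] P L ..
  qed
  also have "\<dots> = TRa K a ms * ((\<Prod>j<N - 1. (1 / (real (ms ! j) + a)) ^ (e ! j)) * (1 / (real (ms ! (N - 1)) + a)) ^ (e ! (N - 1)))"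
    unfolding TRa_def N_def[symmetric] prod.distrib laste lastms by (simp only: mult_ac)
  also have "(\<Prod>j<N - 1. (1 / (real (ms ! j) + a)) ^ (e ! j)) * (1 / (real (ms ! (N - 1)) + a)) ^ (e ! (N - 1))
      = (\<Prod>j<N. (1 / (real (ms ! j) + a)) ^ (e ! j))"
    using prod.lessThan_Suc[of "\<lambda>j. (1 / (real (ms ! j) + a)) ^ (e ! j)" "N - 1", symmetric] unfolding N(1) .
  finally show ?thesis by (simp add: N_def)
qed



lemma ins_aux:
  "length xs = length ys \<Longrightarrow>
    length (concat (map (\<lambda>(k, i). k # replicate i (1::nat)) (zip xs ys))) = length xs + sum_list ys
  \<and> gK (concat (map (\<lambda>(k, i). k # replicate i (1::nat)) (zip xs ys))) = gK xs
  \<and> set (concat (map (\<lambda>(k, i). k # replicate i (1::nat)) (zip xs ys))) \<subseteq> set xs \<union> {1}"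
proof (induction xs arbitrary: ys)
  case Nil then show ?case by (simp add: gK_def)
next
  case (Cons x xs)
  then obtain y ys' where ys: "ys = y # ys'" by (cases ys) auto
  with Cons.prems have "length xs = length ys'" by simp
  from Cons.IH[OF this] show ?case using ys by (auto simp: gK_def)
qed

lemma ins_ones_props:
  assumes K: "ks \<noteq> []" and len: "length is = length ks - 1"
  shows "length (ins_ones ks is) = length ks + sum_list is"
    and "last (ins_ones ks is) = last ks"
    and "gK (ins_ones ks is) = gK ks"
    and "set (ins_ones ks is) \<subseteq> set ks \<union> {1}"
    and "ins_ones ks is \<noteq> []"
proof -
  have lb: "length (butlast ks) = length is" using len by simp
  note A = ins_aux[OF lb]
  have ks: "ks = butlast ks @ [last ks]" using K by simp
  show "length (ins_ones ks is) = length ks + sum_list is"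
    unfolding ins_ones_def using A K by (cases ks) auto
  show "last (ins_ones ks is) = last ks" unfolding ins_ones_def by simp
  show "gK (ins_ones ks is) = gK ks"
  proof -
    have "gK ks = gK (butlast ks) + (last ks - 1)" by (subst ks) (simp add: gK_def)
    then show ?thesis unfolding ins_ones_def using A by (simp add: gK_def)
  qed
  show "set (ins_ones ks is) \<subseteq> set ks \<union> {1}"
    unfolding ins_ones_def using A K by (auto dest: in_set_butlastD)
  show "ins_ones ks is \<noteq> []" by (simp add: ins_ones_def)
qed



definition Lst :: "nat \<Rightarrow> nat \<Rightarrow> nat list set" where
  "Lst N R = {xs. set xs \<subseteq> {..<R} \<and> length xs = N}"

lemma finite_Lst: "finite (Lst N R)"
  unfolding Lst_def by (rule finite_lists_length_eq) simp

lemma sum_Lst_prod: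
  fixes f :: "nat \<Rightarrow> nat \<Rightarrow> real"
  shows "(\<Sum>xs\<in>Lst N R. \<Prod>j<N. f j (xs ! j)) = (\<Prod>j<N. \<Sum>x<R. f j x)"
proof (induction N)
  case 0
  have "Lst 0 R = {[]}" by (auto simp: Lst_def)
  then show ?case by simp
next
  case (Suc N)
  have eq: "Lst (Suc N) R = (\<lambda>(xs, x). xs @ [x]) ` (Lst N R \<times> {..<R})"
  proof (intro set_eqI iffI)
    fix ys assume "ys \<in> Lst (Suc N) R"
    then have ys: "set ys \<subseteq> {..<R}" "length ys = Suc N" by (auto simp: Lst_def)
    then have "ys = butlast ys @ [last ys]" by (metis append_butlast_last_id list.size(3) nat.distinct(1))
    moreover have "butlast ys \<in> Lst N R" using ys by (auto simp: Lst_def dest: in_set_butlastD)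
    moreover have "last ys \<in> {..<R}" using ys by (metis last_in_set list.size(3) nat.distinct(1) subsetD)
    ultimately show "ys \<in> (\<lambda>(xs, x). xs @ [x]) ` (Lst N R \<times> {..<R})" by (metis (no_types, lifting) SigmaI case_prod_conv image_eqI)
  qed (auto simp: Lst_def)
  have inj: "inj_on (\<lambda>(xs, x). xs @ [x]) (Lst N R \<times> {..<R})"
    by (auto simp: inj_on_def)
  have "(\<Sum>xs\<in>Lst (Suc N) R. \<Prod>j<Suc N. f j (xs ! j))
      = (\<Sum>(xs, x)\<in>Lst N R \<times> {..<R}. \<Prod>j<Suc N. f j ((xs @ [x]) ! j))"
    unfolding eq by (subst sum.reindex[OF inj]) (simp add: case_prod_beta')
  also have "\<dots> = (\<Sum>(xs, x)\<in>Lst N R \<times> {..<R}. (\<Prod>j<N. f j (xs ! j)) * f N x)"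
  proof (intro sum.cong refl, clarify)
    fix xs x assume "xs \<in> Lst N R"
    then have l: "length xs = N" by (simp add: Lst_def)
    have "(\<Prod>j<Suc N. f j ((xs @ [x]) ! j)) = (\<Prod>j<N. f j ((xs @ [x]) ! j)) * f N ((xs @ [x]) ! N)"
      by simp
    also have "(\<Prod>j<N. f j ((xs @ [x]) ! j)) = (\<Prod>j<N. f j (xs ! j))"
      using l by (intro prod.cong refl) (simp add: nth_append)
    also have "(xs @ [x]) ! N = x" using l by (simp add: nth_append)
    finally show "(\<Prod>j<Suc N. f j ((xs @ [x]) ! j)) = (\<Prod>j<N. f j (xs ! j)) * f N x" .
  qed
  also have "\<dots> = (\<Sum>xs\<in>Lst N R. \<Prod>j<N. f j (xs ! j)) * (\<Sum>x<R. f N x)"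
    by (simp add: sum_product sum.cartesian_product)
  finally show ?case using Suc.IH by simp
qed

lemma Lst_geom:
  fixes q :: "nat \<Rightarrow> real"
  assumes q: "\<And>j. j < N \<Longrightarrow> 0 \<le> q j \<and> q j < 1" and A: "A \<subseteq> Lst N R"
  shows "(\<Sum>xs\<in>A. \<Prod>j<N. (q j) ^ (xs ! j)) \<le> (\<Prod>j<N. 1 / (1 - q j))"
proof -
  have "(\<Sum>xs\<in>A. \<Prod>j<N. (q j) ^ (xs ! j)) \<le> (\<Sum>xs\<in>Lst N R. \<Prod>j<N. (q j) ^ (xs ! j))"
    using A finite_Lst q by (intro sum_mono2 prod_nonneg) auto
  also have "\<dots> = (\<Prod>j<N. \<Sum>x<R. (q j) ^ x)" by (rule sum_Lst_prod)
  also have "\<dots> \<le> (\<Prod>j<N. 1 / (1 - q j))"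
  proof (intro prod_mono conjI)
    fix j assume "j \<in> {..<N}"
    then have qj: "0 \<le> q j" "q j < 1" using q by auto
    show "0 \<le> (\<Sum>x<R. q j ^ x)" using qj by (intro sum_nonneg) auto
    have "(\<Sum>x<R. q j ^ x) = (1 - q j ^ R) / (1 - q j)" using qj by (subst sum_gp_strict) auto
    also have "\<dots> \<le> 1 / (1 - q j)" using qj by (intro divide_right_mono) auto
    finally show "(\<Sum>x<R. q j ^ x) \<le> 1 / (1 - q j)" .
  qed
  finally show ?thesis .
qed

lemma Lst_geom_const:
  fixes q :: real
  assumes q: "0 \<le> q" "q < 1" and A: "A \<subseteq> Lst N R"
  shows "(\<Sum>xs\<in>A. q ^ sum_list xs) \<le> (1 / (1 - q)) ^ N"
proof -
  have "(\<Sum>xs\<in>A. q ^ sum_list xs) = (\<Sum>xs\<in>A. \<Prod>j<N. q ^ (xs ! j))"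
  proof (intro sum.cong refl)
    fix xs assume "xs \<in> A"
    then have l: "length xs = N" using A by (auto simp: Lst_def)
    have "sum_list xs = (\<Sum>j<N. xs ! j)" using l sum_list_map_nth[of "\<lambda>x. x" xs] by simp
    then show "q ^ sum_list xs = (\<Prod>j<N. q ^ (xs ! j))" by (simp add: power_sum)
  qed
  also have "\<dots> \<le> (\<Prod>j<N. 1 / (1 - q))" using Lst_geom[of N "\<lambda>_. q" A R] q A by auto
  finally show ?thesis by simp
qed

lemma mem_Lst_sum: "length xs = N \<Longrightarrow> sum_list xs < R \<Longrightarrow> xs \<in> Lst N R"
  unfolding Lst_def by (auto dest: member_le_sum_list)



definition adm :: "nat list \<Rightarrow> bool" where
  "adm K \<longleftrightarrow> K \<noteq> [] \<and> (\<forall>k\<in>set K. k \<ge> 1) \<and> last K \<ge> 2"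

lemma last_map2_add:
  assumes "K \<noteq> []" "length e = length K"
  shows "last (map2 (+) K e) = last K + last e"
proof -
  define N where "N = length K"
  have N: "N > 0" using assms by (simp add: N_def)
  have ne: "map2 (+) K e \<noteq> []" "e \<noteq> []" using assms by auto
  have "last (map2 (+) K e) = map2 (+) K e ! (N - 1)" using ne assms by (simp add: last_conv_nth N_def)
  also have "\<dots> = K ! (N - 1) + e ! (N - 1)" using N assms by (intro nth_map2_add) (auto simp: N_def)
  finally show ?thesis using assms ne by (simp add: last_conv_nth N_def)
qed

lemma adm_map2:
  assumes "adm K" "length e = length K"
  shows "adm (map2 (+) K e)" "length (map2 (+) K e) = length K"
proof -
  show "length (map2 (+) K e) = length K" using assms by simp
  have K: "K \<noteq> []" "\<forall>k\<in>set K. k \<ge> 1" "last K \<ge> 2" using assms by (auto simp: adm_def)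
  have "\<forall>k\<in>set (map2 (+) K e). k \<ge> 1"
  proof
    fix k assume "k \<in> set (map2 (+) K e)"
    then obtain j where j: "j < length K" "k = map2 (+) K e ! j" using assms by (auto simp: in_set_conv_nth)
    then have "k = K ! j + e ! j" using assms by simp
    moreover have "K ! j \<ge> 1" using K j by auto
    ultimately show "k \<ge> 1" by simp
  qed
  then show "adm (map2 (+) K e)" using K last_map2_add[OF K(1) assms(2)] assms by (auto simp: adm_def)
qed

lemma TRa_summable:
  assumes a: "a > 0" and b: "0 < b" "b \<le> a" and K: "adm K" and sm: "U a b summable_on Srt (length K)"
  shows "TRa K a summable_on Srt (length K)"
proof (rule summable_on_comparison_test)
  show "(\<lambda>ms. (max 1 (1/a)) ^ gK K * U a b ms) summable_on Srt (length K)"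
    by (rule summable_on_cmult_right[OF sm])
  fix ms assume "ms \<in> Srt (length K)"
  then have l: "length ms = length K" by (simp add: Srt_def)
  have "TRa K a ms \<le> (max 1 (1/a)) ^ gK K * Vb a ms"
    using K l a by (intro TR_le_Vb) (auto simp: adm_def)
  also have "\<dots> \<le> (max 1 (1/a)) ^ gK K * U a b ms"
    using Vb_le_U[OF b] by (intro mult_left_mono) auto
  finally show "TRa K a ms \<le> (max 1 (1/a)) ^ gK K * U a b ms" .
  show "0 \<le> TRa K a ms" using TRa_nonneg[OF a] .
qed

lemma infsum_sum_fin_aux:
  fixes f :: "'i \<Rightarrow> 'a \<Rightarrow> real"
  assumes "finite I"
  shows "(\<forall>i\<in>I. f i summable_on A) \<longrightarrow> infsum (\<lambda>x. \<Sum>i\<in>I. f i x) A = (\<Sum>i\<in>I. infsum (f i) A)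
     \<and> (\<lambda>x. \<Sum>i\<in>I. f i x) summable_on A"
  using assms
proof (induction I rule: finite_induct)
  case empty then show ?case by simp
next
  case (insert j I)
  show ?case
  proof
    assume H: "\<forall>i\<in>insert j I. f i summable_on A"
    then have IH: "infsum (\<lambda>x. \<Sum>i\<in>I. f i x) A = (\<Sum>i\<in>I. infsum (f i) A)"
      and s: "(\<lambda>x. \<Sum>i\<in>I. f i x) summable_on A" using insert by auto
    have fj: "f j summable_on A" using H by auto
    have "infsum (\<lambda>x. \<Sum>i\<in>insert j I. f i x) A = infsum (\<lambda>x. f j x + (\<Sum>i\<in>I. f i x)) A"
      using insert by simp
    also have "\<dots> = infsum (f j) A + infsum (\<lambda>x. \<Sum>i\<in>I. f i x) A" by (rule infsum_add[OF fj s])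
    finally have 1: "infsum (\<lambda>x. \<Sum>i\<in>insert j I. f i x) A = (\<Sum>i\<in>insert j I. infsum (f i) A)"
      using insert IH by simp
    have "(\<lambda>x. f j x + (\<Sum>i\<in>I. f i x)) summable_on A" by (rule summable_on_add[OF fj s])
    then have 2: "(\<lambda>x. \<Sum>i\<in>insert j I. f i x) summable_on A" using insert by simp
    show "infsum (\<lambda>x. \<Sum>i\<in>insert j I. f i x) A = (\<Sum>i\<in>insert j I. infsum (f i) A) \<and>
      (\<lambda>x. \<Sum>i\<in>insert j I. f i x) summable_on A" using 1 2 by blast
  qed
qed

lemma infsum_sum_fin:
  fixes f :: "'i \<Rightarrow> 'a \<Rightarrow> real"
  assumes "finite I" "\<And>i. i \<in> I \<Longrightarrow> f i summable_on A"
  shows "infsum (\<lambda>x. \<Sum>i\<in>I. f i x) A = (\<Sum>i\<in>I. infsum (f i) A)"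
    and "(\<lambda>x. \<Sum>i\<in>I. f i x) summable_on A"
  using infsum_sum_fin_aux[OF assms(1), of f A] assms(2) by auto

lemma sum_group_sumlist:
  fixes h :: "nat list \<Rightarrow> real"
  shows "(\<Sum>i<L0. \<Sum>xs\<in>{xs. length xs = N \<and> sum_list xs = i}. h xs) = (\<Sum>xs\<in>{xs. length xs = N \<and> sum_list xs < L0}. h xs)"
proof -
  have fin: "finite {xs. length xs = N \<and> sum_list xs < L0}"
    by (rule finite_subset[OF _ finite_Lst[of N L0]]) (auto intro: mem_Lst_sum)
  have "(\<Sum>xs\<in>{xs. length xs = N \<and> sum_list xs < L0}. h xs) =
      (\<Sum>i<L0. \<Sum>xs\<in>{x. x \<in> {xs. length xs = N \<and> sum_list xs < L0} \<and> sum_list x = i}. h xs)"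
    by (rule sum.group[symmetric]) (use fin in auto)
  also have "\<dots> = (\<Sum>i<L0. \<Sum>xs\<in>{xs. length xs = N \<and> sum_list xs = i}. h xs)"
    by (intro sum.cong refl arg_cong[where f="\<lambda>S. sum h S"]) auto
  finally show ?thesis ..
qed

lemma sum_list_concat_nat: "sum_list (concat xss) = sum_list (map sum_list (xss :: nat list list))"
  by (induction xss) auto



lemma Vb_geom_eq_U:
  assumes a: "a > 0" "0 \<le> \<rho>" "\<rho> < a" and l: "length ms = N"
  shows "Vb a ms * (\<Prod>j<N. 1 / (1 - \<rho> / (real (ms ! j) + a))) = U a (a - \<rho>) ms"
proof -
  have "(\<Prod>j<N. 1 / (real (ms ! j) + a)) * (\<Prod>j<N. 1 / (1 - \<rho> / (real (ms ! j) + a)))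
      = (\<Prod>j<N. 1 / (real (ms ! j) + (a - \<rho>)))"
    unfolding prod.distrib[symmetric]
  proof (intro prod.cong refl)
    fix j
    have x: "real (ms ! j) + a > \<rho>" using a by simp
    then show "1 / (real (ms ! j) + a) * (1 / (1 - \<rho> / (real (ms ! j) + a))) = 1 / (real (ms ! j) + (a - \<rho>))"
      using a by (simp add: field_simps)
  qed
  then show ?thesis unfolding Vb_def U_def l by (simp add: mult.assoc)
qed

lemma E_sum_bound:
  assumes a: "a > 0" and \<rho>: "0 \<le> \<rho>" "\<rho> < a" and sm: "U a (a - \<rho>) summable_on Srt N"
  shows "(\<Sum>r<R. \<Sum>ls\<in>{ls. length ls = N \<and> sum_list ls = r}.
            infsum (\<lambda>ms. Vb a ms * (\<Prod>j<N. (\<rho> / (real (ms ! j) + a)) ^ (ls ! j))) (Srt N))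
         \<le> infsum (U a (a - \<rho>)) (Srt N)"
proof -
  define F where "F ls ms = Vb a ms * (\<Prod>j<N. (\<rho> / (real (ms ! j) + a)) ^ (ls ! j))" for ls ms
  define JJ where "JJ = {ls. length ls = N \<and> sum_list ls < R}"
  have JJ: "JJ \<subseteq> Lst N R" by (auto simp: JJ_def intro: mem_Lst_sum)
  have finJJ: "finite JJ" using finite_subset[OF JJ finite_Lst] .
  have q: "0 \<le> \<rho> / (real m + a) \<and> \<rho> / (real m + a) < 1" for m
    using a \<rho> by (auto simp: divide_simps)
  have bpos: "0 < a - \<rho>" "a - \<rho> \<le> a" using \<rho> by auto
  have Fle: "0 \<le> F ls ms \<and> F ls ms \<le> U a (a - \<rho>) ms" for ls ms
  proof -
    have p1: "(\<Prod>j<N. (\<rho> / (real (ms ! j) + a)) ^ (ls ! j)) \<le> 1"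
      using q by (intro prod_le_1 conjI power_le_one) (auto intro: less_imp_le)
    have p0: "0 \<le> (\<Prod>j<N. (\<rho> / (real (ms ! j) + a)) ^ (ls ! j))"
      using q by (intro prod_nonneg zero_le_power) auto
    have "F ls ms \<le> Vb a ms * 1" unfolding F_def using p1 Vb_nonneg[OF a] by (intro mult_left_mono) auto
    also have "\<dots> \<le> U a (a - \<rho>) ms" using Vb_le_U[OF bpos] by simp
    finally show ?thesis unfolding F_def using p0 Vb_nonneg[OF a] by simp
  qed
  have Fsm: "F ls summable_on Srt N" for ls
    by (rule summable_on_comparison_test[OF sm]) (use Fle in auto)
  have "(\<Sum>r<R. \<Sum>ls\<in>{ls. length ls = N \<and> sum_list ls = r}. infsum (F ls) (Srt N))
      = (\<Sum>ls\<in>JJ. infsum (F ls) (Srt N))"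
    unfolding JJ_def by (rule sum_group_sumlist)
  also have "\<dots> = infsum (\<lambda>ms. \<Sum>ls\<in>JJ. F ls ms) (Srt N)"
    by (rule infsum_sum_fin(1)[symmetric]) (use finJJ Fsm in auto)
  also have "\<dots> \<le> infsum (U a (a - \<rho>)) (Srt N)"
  proof (rule infsum_mono)
    show "(\<lambda>ms. \<Sum>ls\<in>JJ. F ls ms) summable_on Srt N"
      by (rule infsum_sum_fin(2)) (use finJJ Fsm in auto)
    show "U a (a - \<rho>) summable_on Srt N" by (rule sm)
    fix ms assume "ms \<in> Srt N"
    then have l: "length ms = N" by (simp add: Srt_def)
    have "(\<Sum>ls\<in>JJ. F ls ms) = Vb a ms * (\<Sum>ls\<in>JJ. \<Prod>j<N. (\<rho> / (real (ms ! j) + a)) ^ (ls ! j))"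
      by (simp add: F_def sum_distrib_left)
    also have "\<dots> \<le> Vb a ms * (\<Prod>j<N. 1 / (1 - \<rho> / (real (ms ! j) + a)))"
      using Lst_geom[OF _ JJ, of "\<lambda>j. \<rho> / (real (ms ! j) + a)"] q Vb_nonneg[OF a]
      by (intro mult_left_mono) auto
    also have "\<dots> = U a (a - \<rho>) ms" by (rule Vb_geom_eq_U[OF a \<rho> l])
    finally show "(\<Sum>ls\<in>JJ. F ls ms) \<le> U a (a - \<rho>) ms" .
  qed
  finally show ?thesis unfolding F_def .
qed

lemma S_bound:
  fixes \<alpha> :: complex
  assumes a: "a > 0" "Re \<alpha> \<ge> a" and \<rho>: "0 \<le> \<rho>" "\<rho> < a" and K: "adm K"
    and sm: "U a (a - \<rho>) summable_on Srt (length K)"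
  shows "\<rho> ^ r * norm (S r K \<alpha>) \<le> (max 1 (1/a)) ^ gK K *
     (\<Sum>ls\<in>{ls. length ls = length K \<and> sum_list ls = r}.
        infsum (\<lambda>ms. Vb a ms * (\<Prod>j<length K. (\<rho> / (real (ms ! j) + a)) ^ (ls ! j))) (Srt (length K)))"
proof -
  define N where "N = length K"
  define D where "D = max 1 (1/a)"
  define J where "J = {ls. length ls = N \<and> sum_list ls = r}"
  have bpos: "0 < a - \<rho>" "a - \<rho> \<le> a" using \<rho> by auto
  have Kp: "K \<noteq> []" "\<forall>k\<in>set K. k \<ge> 1" "last K \<ge> 2" using K by (auto simp: adm_def)
  have D: "D \<ge> 1" by (simp add: D_def)
  have "\<rho> ^ r * norm (S r K \<alpha>) \<le> \<rho> ^ r * (\<Sum>ls\<in>J. norm (Z (map2 (+) K ls) \<alpha>))"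
    unfolding S_def J_def N_def using \<rho> by (intro mult_left_mono norm_sum) auto
  also have "\<dots> = (\<Sum>ls\<in>J. \<rho> ^ r * norm (Z (map2 (+) K ls) \<alpha>))" by (simp add: sum_distrib_left)
  also have "\<dots> \<le> (\<Sum>ls\<in>J. D ^ gK K * infsum (\<lambda>ms. Vb a ms * (\<Prod>j<N. (\<rho> / (real (ms ! j) + a)) ^ (ls ! j))) (Srt N))"
  proof (intro sum_mono)
    fix ls assume "ls \<in> J"
    then have ls: "length ls = N" "sum_list ls = r" by (auto simp: J_def)
    define K' where "K' = map2 (+) K ls"
    have K': "adm K'" "length K' = N" using adm_map2[OF K] ls by (auto simp: K'_def N_def)
    have smT: "TRa K' a summable_on Srt N" using TRa_summable[OF a(1) bpos K'(1)] sm K' by (simp add: N_def)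
    have Zle: "norm (Z K' \<alpha>) \<le> infsum (TRa K' a) (Srt N)"
      using Z_norm_le[OF a _ smT[folded K'(2)]] K' by (auto simp: adm_def)
    define G where "G ms = Vb a ms * (\<Prod>j<N. (\<rho> / (real (ms ! j) + a)) ^ (ls ! j))" for ms
    have q: "0 \<le> \<rho> / (real m + a) \<and> \<rho> / (real m + a) < 1" for m
      using a \<rho> by (auto simp: divide_simps)
    have G0: "G summable_on Srt N"
    proof (rule summable_on_comparison_test[OF sm[folded N_def]])
      fix ms
      have p1: "(\<Prod>j<N. (\<rho> / (real (ms ! j) + a)) ^ (ls ! j)) \<le> 1"
        using q by (intro prod_le_1 conjI power_le_one) (auto intro: less_imp_le)
      have p0: "0 \<le> (\<Prod>j<N. (\<rho> / (real (ms ! j) + a)) ^ (ls ! j))"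
        using q by (intro prod_nonneg zero_le_power) auto
      have "G ms \<le> Vb a ms * 1" unfolding G_def using p1 Vb_nonneg[OF a(1)] by (intro mult_left_mono) auto
      also have "\<dots> \<le> U a (a - \<rho>) ms" using Vb_le_U[OF bpos] by simp
      finally show "G ms \<le> U a (a - \<rho>) ms" .
      show "0 \<le> G ms" unfolding G_def using p0 Vb_nonneg[OF a(1)] by simp
    qed
    have Gsm: "(\<lambda>ms. D ^ gK K * G ms) summable_on Srt N" by (rule summable_on_cmult_right[OF G0])
    have pt: "\<rho> ^ r * TRa K' a ms \<le> D ^ gK K * G ms" if ms: "ms \<in> Srt N" for ms
    proof -
      have lm: "length ms = length K" using ms by (simp add: Srt_def N_def)
      have "TRa K' a ms = TRa K a ms * (\<Prod>j<N. (1 / (real (ms ! j) + a)) ^ (ls ! j))"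
        unfolding K'_def N_def using Kp ls lm by (intro TRa_add) (auto simp: N_def)
      moreover have "\<rho> ^ r * (\<Prod>j<N. (1 / (real (ms ! j) + a)) ^ (ls ! j)) = (\<Prod>j<N. (\<rho> / (real (ms ! j) + a)) ^ (ls ! j))"
      proof -
        have "(\<Prod>j<N. (\<rho> / (real (ms ! j) + a)) ^ (ls ! j)) = (\<Prod>j<N. \<rho> ^ (ls ! j) * (1 / (real (ms ! j) + a)) ^ (ls ! j))"
          by (intro prod.cong refl) (simp add: power_mult_distrib[symmetric])
        also have "\<dots> = (\<Prod>j<N. \<rho> ^ (ls ! j)) * (\<Prod>j<N. (1 / (real (ms ! j) + a)) ^ (ls ! j))"
          by (rule prod.distrib)
        also have "(\<Prod>j<N. \<rho> ^ (ls ! j)) = \<rho> ^ (\<Sum>j<N. ls ! j)" by (rule power_sum[symmetric])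
        also have "(\<Sum>j<N. ls ! j) = r" using ls sum_list_map_nth[of "\<lambda>x. x" ls] by simp
        finally show ?thesis by simp
      qed
      moreover have "TRa K a ms \<le> D ^ gK K * Vb a ms"
        unfolding D_def using Kp lm a by (intro TR_le_Vb) auto
      moreover have "0 \<le> (\<Prod>j<N. (\<rho> / (real (ms ! j) + a)) ^ (ls ! j))"
        using q by (intro prod_nonneg zero_le_power) auto
      ultimately have "\<rho> ^ r * TRa K' a ms = TRa K a ms * (\<Prod>j<N. (\<rho> / (real (ms ! j) + a)) ^ (ls ! j))"
        by (simp add: mult_ac)
      also have "\<dots> \<le> D ^ gK K * Vb a ms * (\<Prod>j<N. (\<rho> / (real (ms ! j) + a)) ^ (ls ! j))"
        using \<open>TRa K a ms \<le> D ^ gK K * Vb a ms\<close> \<open>0 \<le> (\<Prod>j<N. _)\<close> by (intro mult_right_mono) auto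
      finally show ?thesis by (simp add: G_def mult_ac)
    qed
    have "\<rho> ^ r * norm (Z (map2 (+) K ls) \<alpha>) \<le> \<rho> ^ r * infsum (TRa K' a) (Srt N)"
      using Zle \<rho> by (intro mult_left_mono) (auto simp: K'_def)
    also have "\<dots> = infsum (\<lambda>ms. \<rho> ^ r * TRa K' a ms) (Srt N)"
      by (rule infsum_cmult_right[symmetric]) (use smT in auto)
    also have "\<dots> \<le> infsum (\<lambda>ms. D ^ gK K * G ms) (Srt N)"
      by (rule infsum_mono[OF summable_on_cmult_right[OF smT] Gsm]) (use pt in auto)
    also have "\<dots> = D ^ gK K * infsum G (Srt N)"
      by (rule infsum_cmult_right) (use G0 in auto)
    finally show "\<rho> ^ r * norm (Z (map2 (+) K ls) \<alpha>)
        \<le> D ^ gK K * infsum (\<lambda>ms. Vb a ms * (\<Prod>j<N. (\<rho> / (real (ms ! j) + a)) ^ (ls ! j))) (Srt N)"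
      unfolding G_def .
  qed
  also have "\<dots> = D ^ gK K * (\<Sum>ls\<in>J. infsum (\<lambda>ms. Vb a ms * (\<Prod>j<N. (\<rho> / (real (ms ! j) + a)) ^ (ls ! j))) (Srt N))"
    by (simp add: sum_distrib_left)
  finally show ?thesis unfolding D_def J_def N_def .
qed



definition Y1 :: "nat list \<Rightarrow> real \<Rightarrow> real \<Rightarrow> nat \<Rightarrow> nat \<Rightarrow> real" where
  "Y1 ks a \<rho> i r = (\<Sum>js\<in>{js. length js = length ks - 1 \<and> sum_list js = i}.
     \<Sum>ls\<in>{ls. length ls = length ks + i \<and> sum_list ls = r}.
       infsum (\<lambda>ms. Vb a ms * (\<Prod>j<length ks + i. (\<rho> / (real (ms ! j) + a)) ^ (ls ! j))) (Srt (length ks + i)))"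

definition M1 :: "nat list \<Rightarrow> real \<Rightarrow> real \<Rightarrow> nat \<Rightarrow> real" where
  "M1 ks a \<rho> l = (max 1 (1/a)) ^ gK ks * (\<Sum>i\<le>l. \<rho> ^ i * Y1 ks a \<rho> i (l - i))"

lemma Y1_nonneg: "a > 0 \<Longrightarrow> 0 \<le> \<rho> \<Longrightarrow> \<rho> < a \<Longrightarrow> 0 \<le> Y1 ks a \<rho> i r"
  unfolding Y1_def
  by (intro sum_nonneg infsum_nonneg mult_nonneg_nonneg Vb_nonneg prod_nonneg zero_le_power divide_nonneg_pos) auto

lemma series1_le:
  fixes \<alpha> \<beta> :: complex
  assumes ks: "adm ks" and a: "a > 0" "Re \<alpha> \<ge> a" and \<rho>: "0 \<le> \<rho>" "\<rho> < a" "cmod (\<alpha> - \<beta>) \<le> \<rho>"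
    and sm: "\<And>N. N \<ge> 1 \<Longrightarrow> U a (a - \<rho>) summable_on Srt N"
  shows "norm (series1_term ks \<beta> \<alpha> l) \<le> M1 ks a \<rho> l"
proof -
  define n where "n = length ks"
  define I where "I i = {js :: nat list. length js = n - 1 \<and> sum_list js = i}" for i :: nat
  have ksp: "ks \<noteq> []" "last ks \<ge> 2" "\<forall>k\<in>set ks. k \<ge> 1" using ks by (auto simp: adm_def)
  have "norm (series1_term ks \<beta> \<alpha> l) \<le> \<rho> ^ l * (\<Sum>i\<le>l. \<Sum>js\<in>I i. norm (S (l - i) (ins_ones ks js) \<alpha>))"
  proof -
    have "norm (series1_term ks \<beta> \<alpha> l) = cmod (\<alpha> - \<beta>) ^ l *
        norm (\<Sum>i\<le>l. \<Sum>js\<in>I i. S (l - i) (ins_ones ks js) \<alpha>)"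
      unfolding series1_term_def I_def n_def by (simp add: norm_mult norm_power)
    also have "\<dots> \<le> \<rho> ^ l * (\<Sum>i\<le>l. \<Sum>js\<in>I i. norm (S (l - i) (ins_ones ks js) \<alpha>))"
    proof (rule mult_mono)
      show "cmod (\<alpha> - \<beta>) ^ l \<le> \<rho> ^ l" using \<rho> by (intro power_mono) auto
      show "norm (\<Sum>i\<le>l. \<Sum>js\<in>I i. S (l - i) (ins_ones ks js) \<alpha>) \<le> (\<Sum>i\<le>l. \<Sum>js\<in>I i. norm (S (l - i) (ins_ones ks js) \<alpha>))"
        by (rule order_trans[OF norm_sum sum_mono]) (rule norm_sum)
    qed (use \<rho> in auto)
    finally show ?thesis .
  qed
  also have "\<dots> = (\<Sum>i\<le>l. \<rho> ^ i * (\<Sum>js\<in>I i. \<rho> ^ (l - i) * norm (S (l - i) (ins_ones ks js) \<alpha>)))"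
    unfolding sum_distrib_left
  proof (intro sum.cong refl)
    fix i js assume "i \<in> {..l}"
    then have "\<rho> ^ l = \<rho> ^ i * \<rho> ^ (l - i)" by (simp add: power_add[symmetric])
    then show "\<rho> ^ l * norm (S (l - i) (ins_ones ks js) \<alpha>) = \<rho> ^ i * (\<rho> ^ (l - i) * norm (S (l - i) (ins_ones ks js) \<alpha>))"
      by simp
  qed
  also have "\<dots> \<le> (\<Sum>i\<le>l. \<rho> ^ i * (\<Sum>js\<in>I i. (max 1 (1/a)) ^ gK ks *
      (\<Sum>ls\<in>{ls. length ls = n + i \<and> sum_list ls = l - i}.
        infsum (\<lambda>ms. Vb a ms * (\<Prod>j<n + i. (\<rho> / (real (ms ! j) + a)) ^ (ls ! j))) (Srt (n + i)))))"
  proof (intro sum_mono mult_left_mono)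
    fix i js assume i: "i \<in> {..l}" and js: "js \<in> I i"
    have len: "length js = length ks - 1" and si: "sum_list js = i" using js by (auto simp: I_def n_def)
    note P = ins_ones_props[OF ksp(1) len]
    have K0: "adm (ins_ones ks js)"
      using P ksp unfolding adm_def by auto
    have lK0: "length (ins_ones ks js) = n + i" using P(1) si by (simp add: n_def)
    have "length ks + i \<ge> 1" using ksp by (cases ks) auto
    then have smK: "U a (a - \<rho>) summable_on Srt (length (ins_ones ks js))" using sm lK0 by (simp add: n_def)
    from S_bound[OF a \<rho>(1,2) K0 smK, of "l - i"]
    show "\<rho> ^ (l - i) * norm (S (l - i) (ins_ones ks js) \<alpha>) \<le> (max 1 (1/a)) ^ gK ks *
      (\<Sum>ls\<in>{ls. length ls = n + i \<and> sum_list ls = l - i}.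
        infsum (\<lambda>ms. Vb a ms * (\<Prod>j<n + i. (\<rho> / (real (ms ! j) + a)) ^ (ls ! j))) (Srt (n + i)))"
      using P(3) lK0 by simp
  qed (use \<rho> in auto)
  also have "\<dots> = M1 ks a \<rho> l"
    unfolding M1_def Y1_def I_def n_def by (simp add: sum_distrib_left mult_ac)
  finally show ?thesis .
qed

lemma series1_summable:
  assumes ks: "adm ks" and a: "a > 0" and \<rho>: "0 \<le> \<rho>" "\<rho> < t" "t < a"
    and Phi: "\<And>N. N \<ge> 1 \<Longrightarrow> U a (a - \<rho>) summable_on Srt N \<and> infsum (U a (a - \<rho>)) (Srt N) \<le> C * (1/t)^N"
  shows "summable (M1 ks a \<rho>)"
proof (rule summableI_nonneg_bounded)
  define n where "n = length ks"
  define D where "D = max 1 (1/a)"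
  define G where "G = gK ks"
  have t: "t > 0" using \<rho> by simp
  have \<rho>a: "\<rho> < a" using \<rho> by simp
  have ksp: "ks \<noteq> []" using ks by (auto simp: adm_def)
  have n1: "n \<ge> 1" using ksp by (cases ks) (auto simp: n_def)
  have D0: "D ^ G \<ge> 0" by (simp add: D_def)
  have C0: "C \<ge> 0"
  proof -
    have "0 \<le> infsum (U a (a - \<rho>)) (Srt 1)" using U_nonneg[of a "a - \<rho>"] a \<rho>a by (intro infsum_nonneg) auto
    also have "\<dots> \<le> C * (1/t)^1" using Phi[of 1] by simp
    finally show ?thesis using t by (simp add: zero_le_divide_iff)
  qed
  fix n0
  show "0 \<le> M1 ks a \<rho> n0"
    unfolding M1_def using Y1_nonneg[OF a \<rho>(1) \<rho>a] \<rho> by (intro mult_nonneg_nonneg sum_nonneg) auto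
  fix L0
  have eqM: "(\<Sum>l<L0. M1 ks a \<rho> l) = D ^ G * (\<Sum>l<L0. \<Sum>i\<le>l. \<rho> ^ i * Y1 ks a \<rho> i (l - i))"
    unfolding M1_def D_def G_def by (simp add: sum_distrib_left)
  have "(\<Sum>l<L0. \<Sum>i\<le>l. \<rho> ^ i * Y1 ks a \<rho> i (l - i)) = (\<Sum>(i, r)\<in>{(i, r). i + r < L0}. \<rho> ^ i * Y1 ks a \<rho> i r)"
    by (rule sum.triangle_reindex[symmetric])
  also have "\<dots> \<le> (\<Sum>(i, r)\<in>{..<L0} \<times> {..<L0}. \<rho> ^ i * Y1 ks a \<rho> i r)"
    using Y1_nonneg[OF a \<rho>(1) \<rho>a] \<rho> by (intro sum_mono2) auto
  also have "\<dots> = (\<Sum>i<L0. \<rho> ^ i * (\<Sum>r<L0. Y1 ks a \<rho> i r))"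
    by (simp add: sum.cartesian_product[symmetric] sum_distrib_left)
  also have "\<dots> \<le> (\<Sum>i<L0. \<rho> ^ i * (\<Sum>js\<in>{js. length js = n - 1 \<and> sum_list js = i}. C * (1/t) ^ (n + i)))"
  proof (intro sum_mono mult_left_mono)
    fix i
    have "(\<Sum>r<L0. Y1 ks a \<rho> i r) = (\<Sum>js\<in>{js. length js = n - 1 \<and> sum_list js = i}. \<Sum>r<L0.
       \<Sum>ls\<in>{ls. length ls = n + i \<and> sum_list ls = r}.
         infsum (\<lambda>ms. Vb a ms * (\<Prod>j<n + i. (\<rho> / (real (ms ! j) + a)) ^ (ls ! j))) (Srt (n + i)))"
      unfolding Y1_def n_def by (rule sum.swap)
    also have "\<dots> \<le> (\<Sum>js\<in>{js. length js = n - 1 \<and> sum_list js = i}. C * (1/t) ^ (n + i))"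
    proof (intro sum_mono)
      fix js
      have N1: "n + i \<ge> 1" using n1 by simp
      have "(\<Sum>r<L0. \<Sum>ls\<in>{ls. length ls = n + i \<and> sum_list ls = r}.
         infsum (\<lambda>ms. Vb a ms * (\<Prod>j<n + i. (\<rho> / (real (ms ! j) + a)) ^ (ls ! j))) (Srt (n + i)))
          \<le> infsum (U a (a - \<rho>)) (Srt (n + i))"
        using Phi[OF N1] by (intro E_sum_bound[OF a \<rho>(1) \<rho>a]) auto
      also have "\<dots> \<le> C * (1/t) ^ (n + i)" using Phi[OF N1] by auto
      finally show "(\<Sum>r<L0. \<Sum>ls\<in>{ls. length ls = n + i \<and> sum_list ls = r}.
         infsum (\<lambda>ms. Vb a ms * (\<Prod>j<n + i. (\<rho> / (real (ms ! j) + a)) ^ (ls ! j))) (Srt (n + i)))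
          \<le> C * (1/t) ^ (n + i)" .
    qed
    finally show "(\<Sum>r<L0. Y1 ks a \<rho> i r) \<le> (\<Sum>js\<in>{js. length js = n - 1 \<and> sum_list js = i}. C * (1/t) ^ (n + i))" .
  qed (use \<rho> in auto)
  also have "\<dots> = C * (1/t) ^ n * (\<Sum>i<L0. \<Sum>js\<in>{js. length js = n - 1 \<and> sum_list js = i}. (\<rho> / t) ^ sum_list js)"
  proof -
    have e: "\<rho> ^ i * (C * (1/t) ^ (n + i)) = C * (1/t) ^ n * (\<rho> / t) ^ i" for i
      by (simp add: power_add power_divide field_simps)
    have "(\<Sum>i<L0. \<rho> ^ i * (\<Sum>js\<in>{js. length js = n - 1 \<and> sum_list js = i}. C * (1/t) ^ (n + i)))
        = (\<Sum>i<L0. \<Sum>js\<in>{js. length js = n - 1 \<and> sum_list js = i}. C * (1/t) ^ n * (\<rho> / t) ^ sum_list js)"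
    proof (intro sum.cong refl)
      fix i
      have "\<rho> ^ i * (\<Sum>js\<in>{js. length js = n - 1 \<and> sum_list js = i}. C * (1/t) ^ (n + i))
          = (\<Sum>js\<in>{js. length js = n - 1 \<and> sum_list js = i}. \<rho> ^ i * (C * (1/t) ^ (n + i)))"
        by (rule sum_distrib_left)
      also have "\<dots> = (\<Sum>js\<in>{js. length js = n - 1 \<and> sum_list js = i}. C * (1/t) ^ n * (\<rho> / t) ^ sum_list js)"
        by (intro sum.cong refl) (simp add: e)
      finally show "\<rho> ^ i * (\<Sum>js\<in>{js. length js = n - 1 \<and> sum_list js = i}. C * (1/t) ^ (n + i))
          = (\<Sum>js\<in>{js. length js = n - 1 \<and> sum_list js = i}. C * (1/t) ^ n * (\<rho> / t) ^ sum_list js)" .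
    qed
    then show ?thesis by (simp only: sum_distrib_left)
  qed
  also have "(\<Sum>i<L0. \<Sum>js\<in>{js. length js = n - 1 \<and> sum_list js = i}. (\<rho> / t) ^ sum_list js)
      = (\<Sum>js\<in>{js. length js = n - 1 \<and> sum_list js < L0}. (\<rho> / t) ^ sum_list js)"
    by (rule sum_group_sumlist)
  also have "\<dots> \<le> (1 / (1 - \<rho> / t)) ^ (n - 1)"
    using \<rho> t by (intro Lst_geom_const) (auto intro: mem_Lst_sum simp: divide_simps)
  finally have "(\<Sum>l<L0. \<Sum>i\<le>l. \<rho> ^ i * Y1 ks a \<rho> i (l - i)) \<le> C * (1/t) ^ n * (1 / (1 - \<rho> / t)) ^ (n - 1)"
    using C0 t by (simp add: mult_left_mono)
  then show "(\<Sum>l<L0. M1 ks a \<rho> l) \<le> D ^ G * (C * (1/t) ^ n * (1 / (1 - \<rho> / t)) ^ (n - 1))"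
    unfolding eqM using D0 by (rule mult_left_mono)
qed



lemma map2_add_assoc:
  fixes K E ls :: "nat list"
  shows "length E = length K \<Longrightarrow> length ls = length K \<Longrightarrow>
    map2 (+) (map2 (+) K E) ls = map2 (+) K (map2 (+) E ls)"
  by (intro nth_equalityI) (auto simp: add.assoc)

lemma sum_list_map2_add:
  "length E = length ls \<Longrightarrow> sum_list (map2 (+) E ls) = sum_list E + sum_list (ls :: nat list)"
proof (induction E arbitrary: ls)
  case Nil then show ?case by simp
next
  case (Cons x E)
  then obtain y ls' where "ls = y # ls'" by (cases ls) auto
  with Cons show ?case by auto
qed

lemma Zadd_bound:
  fixes \<alpha> :: complex
  assumes a: "a > 0" "Re \<alpha> \<ge> a" and b: "0 < b" "b \<le> a" and ks: "adm ks" and le: "length e = length ks"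
    and sm: "U a b summable_on Srt (length ks)"
  shows "norm (Z (map2 (+) ks e) \<alpha>) \<le> (1/a) ^ sum_list e * infsum (TRa ks a) (Srt (length ks))"
proof -
  define N where "N = length ks"
  have K': "adm (map2 (+) ks e)" "length (map2 (+) ks e) = N" using adm_map2[OF ks le] by (auto simp: N_def)
  have ksp: "ks \<noteq> []" "last ks \<ge> 2" using ks by (auto simp: adm_def)
  have smT: "TRa (map2 (+) ks e) a summable_on Srt N" using TRa_summable[OF a(1) b K'(1)] sm K' by (simp add: N_def)
  have smT0: "TRa ks a summable_on Srt N" using TRa_summable[OF a(1) b ks] sm by (simp add: N_def)
  have "norm (Z (map2 (+) ks e) \<alpha>) \<le> infsum (TRa (map2 (+) ks e) a) (Srt N)"
    using Z_norm_le[OF a _ smT[folded K'(2)]] K' by (auto simp: adm_def)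
  also have "\<dots> \<le> infsum (\<lambda>ms. (1/a) ^ sum_list e * TRa ks a ms) (Srt N)"
  proof (rule infsum_mono[OF smT summable_on_cmult_right[OF smT0]])
    fix ms assume "ms \<in> Srt N"
    then have lm: "length ms = length ks" by (simp add: Srt_def N_def)
    have "TRa (map2 (+) ks e) a ms = TRa ks a ms * (\<Prod>j<N. (1 / (real (ms ! j) + a)) ^ (e ! j))"
      unfolding N_def using ksp le lm by (intro TRa_add) auto
    also have "\<dots> \<le> TRa ks a ms * (\<Prod>j<N. (1/a) ^ (e ! j))"
      using a TRa_nonneg[OF a(1)]
      by (intro mult_left_mono prod_mono conjI power_mono) (auto intro!: divide_left_mono)
    also have "(\<Prod>j<N. (1/a) ^ (e ! j)) = (1/a) ^ sum_list e"
      using le sum_list_map_nth[of "\<lambda>x. x" e] by (simp add: power_sum N_def)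
    finally show "TRa (map2 (+) ks e) a ms \<le> (1/a) ^ sum_list e * TRa ks a ms" by (simp add: mult_ac)
  qed
  also have "\<dots> = (1/a) ^ sum_list e * infsum (TRa ks a) (Srt N)"
    by (rule infsum_cmult_right) (use smT0 in auto)
  finally show ?thesis by (simp add: N_def)
qed

definition I2 :: "nat list \<Rightarrow> nat \<Rightarrow> nat list list set" where
  "I2 ks i = {iss. length iss = length ks \<and> (\<forall>m<length ks. length (iss ! m) = blk_len ks m)
                          \<and> sum_list (map sum_list iss) = i}"

definition M2 :: "nat list \<Rightarrow> real \<Rightarrow> real \<Rightarrow> nat \<Rightarrow> real" where
  "M2 ks a \<rho> l = infsum (TRa ks a) (Srt (length ks)) *
     (\<Sum>i\<le>l. (\<Sum>iss\<in>I2 ks i. (\<rho>/a) ^ i) * (\<Sum>ls\<in>{ls. length ls = length ks \<and> sum_list ls = l - i}. (\<rho>/a) ^ (l - i)))"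

lemma series2_le:
  fixes \<alpha> \<beta> :: complex
  assumes ks: "adm ks" and a: "a > 0" "Re \<alpha> \<ge> a" and \<rho>: "0 \<le> \<rho>" "\<rho> < a" "cmod (\<alpha> - \<beta>) \<le> \<rho>"
    and sm: "U a (a - \<rho>) summable_on Srt (length ks)"
  shows "norm (series2_term ks \<beta> \<alpha> l) \<le> M2 ks a \<rho> l"
proof -
  define n where "n = length ks"
  define ZR where "ZR = infsum (TRa ks a) (Srt n)"
  define J where "J r = {ls :: nat list. length ls = n \<and> sum_list ls = r}" for r
  have bpos: "0 < a - \<rho>" "a - \<rho> \<le> a" using \<rho> by auto
  have ZR0: "ZR \<ge> 0" unfolding ZR_def by (intro infsum_nonneg TRa_nonneg a)
  have "norm (series2_term ks \<beta> \<alpha> l) \<le> \<rho> ^ l * (\<Sum>i\<le>l. \<Sum>iss\<in>I2 ks i.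
      norm (S (l - i) (map2 (\<lambda>k is. k + sum_list is) ks iss) \<alpha>))"
  proof -
    have "norm (series2_term ks \<beta> \<alpha> l) = cmod (\<alpha> - \<beta>) ^ l *
        norm (\<Sum>i\<le>l. \<Sum>iss\<in>I2 ks i. S (l - i) (map2 (\<lambda>k is. k + sum_list is) ks iss) \<alpha>)"
      unfolding series2_term_def I2_def by (simp add: norm_mult norm_power)
    also have "\<dots> \<le> \<rho> ^ l * (\<Sum>i\<le>l. \<Sum>iss\<in>I2 ks i. norm (S (l - i) (map2 (\<lambda>k is. k + sum_list is) ks iss) \<alpha>))"
    proof (rule mult_mono)
      show "cmod (\<alpha> - \<beta>) ^ l \<le> \<rho> ^ l" using \<rho> by (intro power_mono) auto
      show "norm (\<Sum>i\<le>l. \<Sum>iss\<in>I2 ks i. S (l - i) (map2 (\<lambda>k is. k + sum_list is) ks iss) \<alpha>)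
         \<le> (\<Sum>i\<le>l. \<Sum>iss\<in>I2 ks i. norm (S (l - i) (map2 (\<lambda>k is. k + sum_list is) ks iss) \<alpha>))"
        by (rule order_trans[OF norm_sum sum_mono]) (rule norm_sum)
    qed (use \<rho> in auto)
    finally show ?thesis .
  qed
  also have "\<dots> = (\<Sum>i\<le>l. \<Sum>iss\<in>I2 ks i. \<rho> ^ l * norm (S (l - i) (map2 (\<lambda>k is. k + sum_list is) ks iss) \<alpha>))"
    by (simp add: sum_distrib_left)
  also have "\<dots> \<le> (\<Sum>i\<le>l. \<Sum>iss\<in>I2 ks i. \<Sum>ls\<in>J (l - i). ZR * ((\<rho>/a) ^ i * (\<rho>/a) ^ (l - i)))"
  proof (intro sum_mono)
    fix i iss assume i: "i \<in> {..l}" and iss: "iss \<in> I2 ks i"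
    have li: "length iss = n" and si: "sum_list (map sum_list iss) = i" using iss by (auto simp: I2_def n_def)
    define E where "E = map sum_list iss"
    have lE: "length E = n" using li by (simp add: E_def)
    have K2: "map2 (\<lambda>k is. k + sum_list is) ks iss = map2 (+) ks E"
      unfolding E_def using li by (intro nth_equalityI) (auto simp: n_def)
    have "\<rho> ^ l * norm (S (l - i) (map2 (+) ks E) \<alpha>) \<le> \<rho> ^ l * (\<Sum>ls\<in>J (l - i). norm (Z (map2 (+) (map2 (+) ks E) ls) \<alpha>))"
    proof -
      have l2: "length (map2 (+) ks E) = n" using lE by (simp add: n_def)
      show ?thesis unfolding S_def J_def l2 using \<rho> by (intro mult_left_mono norm_sum) auto
    qed
    also have "\<dots> \<le> \<rho> ^ l * (\<Sum>ls\<in>J (l - i). (1/a) ^ l * ZR)"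
    proof (intro mult_left_mono sum_mono)
      fix ls assume "ls \<in> J (l - i)"
      then have ls: "length ls = n" "sum_list ls = l - i" by (auto simp: J_def)
      have e: "map2 (+) (map2 (+) ks E) ls = map2 (+) ks (map2 (+) E ls)"
        using lE ls by (intro map2_add_assoc) (auto simp: n_def)
      have se: "sum_list (map2 (+) E ls) = l" using sum_list_map2_add[of E ls] lE ls si i by (simp add: E_def)
      show "norm (Z (map2 (+) (map2 (+) ks E) ls) \<alpha>) \<le> (1/a) ^ l * ZR"
        unfolding e ZR_def n_def using Zadd_bound[OF a bpos ks, of "map2 (+) E ls"] sm lE ls se by (simp add: n_def)
    qed (use \<rho> in auto)
    also have "\<dots> = (\<Sum>ls\<in>J (l - i). ZR * ((\<rho>/a) ^ i * (\<rho>/a) ^ (l - i)))"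
    proof -
      have "\<rho> ^ l * ((1/a) ^ l * ZR) = ZR * ((\<rho>/a) ^ i * (\<rho>/a) ^ (l - i))"
      proof -
        have "(\<rho>/a) ^ i * (\<rho>/a) ^ (l - i) = (\<rho>/a) ^ l" using i by (simp add: power_add[symmetric])
        then show ?thesis by (simp add: power_divide field_simps)
      qed
      then show ?thesis by (simp add: sum_distrib_left)
    qed
    finally show "\<rho> ^ l * norm (S (l - i) (map2 (\<lambda>k is. k + sum_list is) ks iss) \<alpha>)
        \<le> (\<Sum>ls\<in>J (l - i). ZR * ((\<rho>/a) ^ i * (\<rho>/a) ^ (l - i)))" unfolding K2 .
  qed
  also have "\<dots> = M2 ks a \<rho> l"
    unfolding M2_def ZR_def J_def n_def
    by (simp add: sum_distrib_left sum_product mult_ac)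
  finally show ?thesis .
qed



lemma sum_group_gen:
  fixes h :: "'x \<Rightarrow> real"
  assumes fin: "finite {x\<in>A. g x < (L0::nat)}"
  shows "(\<Sum>i<L0. \<Sum>x\<in>{x\<in>A. g x = i}. h x) = (\<Sum>x\<in>{x\<in>A. g x < L0}. h x)"
proof -
  have "(\<Sum>x\<in>{x\<in>A. g x < L0}. h x) = (\<Sum>i<L0. \<Sum>x\<in>{x. x \<in> {x\<in>A. g x < L0} \<and> g x = i}. h x)"
    by (rule sum.group[symmetric]) (use fin in auto)
  also have "\<dots> = (\<Sum>i<L0. \<Sum>x\<in>{x\<in>A. g x = i}. h x)"
    by (intro sum.cong refl arg_cong[where f="\<lambda>S. sum h S"]) auto
  finally show ?thesis ..
qed

lemma I2_geom:
  fixes q :: real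
  assumes q: "0 \<le> q" "q < 1"
  shows "(\<Sum>i<L0. \<Sum>iss\<in>I2 ks i. q ^ i) \<le> (1 / (1 - q)) ^ (\<Sum>m<length ks. blk_len ks m)"
proof -
  define n where "n = length ks"
  define P where "P = (\<Sum>m<n. blk_len ks m)"
  define Base where "Base = {iss :: nat list list. length iss = n \<and> (\<forall>m<n. length (iss ! m) = blk_len ks m)}"
  define g where "g iss = sum_list (map sum_list iss)" for iss :: "nat list list"
  define B' where "B' = {x\<in>Base. g x < L0}"
  have I2eq: "I2 ks i = {x\<in>Base. g x = i}" for i by (auto simp: I2_def Base_def g_def n_def)
  have lenc: "length (concat iss) = P" if "iss \<in> Base" for iss
  proof -
    have "length (concat iss) = sum_list (map length iss)" by (rule length_concat)
    also have "\<dots> = (\<Sum>m<length iss. length (iss ! m))" by (rule sum_list_map_nth)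
    also have "\<dots> = P" using that by (simp add: Base_def P_def)
    finally show ?thesis .
  qed
  have sc: "sum_list (concat iss) = g iss" for iss by (simp add: g_def sum_list_concat_nat)
  have img: "concat ` B' \<subseteq> Lst P L0"
  proof
    fix xs assume "xs \<in> concat ` B'"
    then obtain iss where iss: "iss \<in> B'" "xs = concat iss" by auto
    have "length xs = P" using iss lenc by (auto simp: B'_def)
    moreover have "sum_list xs < L0" using iss sc by (auto simp: B'_def)
    ultimately show "xs \<in> Lst P L0" by (rule mem_Lst_sum)
  qed
  have inj: "inj_on concat B'"
  proof (rule inj_onI)
    fix x y assume x: "x \<in> B'" and y: "y \<in> B'" and xy: "concat x = concat y"
    have lx: "length x = n" "\<forall>m<n. length (x ! m) = blk_len ks m" and ly: "length y = n" "\<forall>m<n. length (y ! m) = blk_len ks m"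
      using x y by (auto simp: B'_def Base_def)
    have "\<forall>(u, v)\<in>set (zip x y). length u = length v"
    proof
      fix p assume "p \<in> set (zip x y)"
      then obtain m where "m < n" "p = (x ! m, y ! m)" using lx ly by (auto simp: in_set_zip)
      then show "case p of (u, v) \<Rightarrow> length u = length v" using lx ly by auto
    qed
    then show "x = y" using xy lx ly concat_eq_concat_iff by metis
  qed
  have finB: "finite B'" using finite_subset[OF img finite_Lst] inj by (simp add: finite_image_iff)
  have "(\<Sum>i<L0. \<Sum>iss\<in>I2 ks i. q ^ i) = (\<Sum>i<L0. \<Sum>iss\<in>{x\<in>Base. g x = i}. q ^ g iss)"
    unfolding I2eq by (intro sum.cong refl) auto
  also have "\<dots> = (\<Sum>iss\<in>B'. q ^ g iss)" unfolding B'_def by (rule sum_group_gen) (use finB in \<open>simp add: B'_def\<close>)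
  also have "\<dots> = (\<Sum>xs\<in>concat ` B'. q ^ sum_list xs)" using inj by (simp add: sum.reindex sc)
  also have "\<dots> \<le> (1 / (1 - q)) ^ P" by (rule Lst_geom_const[OF q img])
  finally show ?thesis by (simp add: P_def n_def)
qed

lemma series2_summable:
  assumes a: "a > 0" and \<rho>: "0 \<le> \<rho>" "\<rho> < a"
  shows "summable (M2 ks a \<rho>)"
proof (rule summableI_nonneg_bounded)
  define q where "q = \<rho> / a"
  define ZR where "ZR = infsum (TRa ks a) (Srt (length ks))"
  define n where "n = length ks"
  define A where "A i = (\<Sum>iss\<in>I2 ks i. q ^ i)" for i
  define B where "B r = (\<Sum>ls\<in>{ls. length ls = n \<and> sum_list ls = r}. q ^ r)" for r
  have q: "0 \<le> q" "q < 1" using a \<rho> by (auto simp: q_def divide_simps)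
  have ZR0: "ZR \<ge> 0" unfolding ZR_def by (intro infsum_nonneg TRa_nonneg a)
  have A0: "A i \<ge> 0" for i using q by (simp add: A_def)
  have B0: "B i \<ge> 0" for i using q by (simp add: B_def)
  have M2eq: "M2 ks a \<rho> l = ZR * (\<Sum>i\<le>l. A i * B (l - i))" for l
    unfolding M2_def A_def B_def ZR_def q_def n_def ..
  fix l show "0 \<le> M2 ks a \<rho> l" unfolding M2eq using ZR0 A0 B0 by (intro mult_nonneg_nonneg sum_nonneg) auto
  fix L0
  have "(\<Sum>l<L0. \<Sum>i\<le>l. A i * B (l - i)) = (\<Sum>(i, r)\<in>{(i, r). i + r < L0}. A i * B r)"
    by (rule sum.triangle_reindex[symmetric])
  also have "\<dots> \<le> (\<Sum>(i, r)\<in>{..<L0} \<times> {..<L0}. A i * B r)"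
    using A0 B0 by (intro sum_mono2) auto
  also have "\<dots> = (\<Sum>i<L0. A i) * (\<Sum>r<L0. B r)"
    by (simp add: sum_product sum.cartesian_product)
  also have "\<dots> \<le> (1 / (1 - q)) ^ (\<Sum>m<length ks. blk_len ks m) * (1 / (1 - q)) ^ n"
  proof (rule mult_mono)
    show "(\<Sum>i<L0. A i) \<le> (1 / (1 - q)) ^ (\<Sum>m<length ks. blk_len ks m)"
      unfolding A_def by (rule I2_geom[OF q])
    have "(\<Sum>r<L0. B r) = (\<Sum>r<L0. \<Sum>ls\<in>{ls. length ls = n \<and> sum_list ls = r}. q ^ sum_list ls)"
      unfolding B_def by (intro sum.cong refl) auto
    also have "\<dots> = (\<Sum>ls\<in>{ls. length ls = n \<and> sum_list ls < L0}. q ^ sum_list ls)"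
      by (rule sum_group_sumlist)
    also have "\<dots> \<le> (1 / (1 - q)) ^ n" by (rule Lst_geom_const[OF q]) (auto intro: mem_Lst_sum)
    finally show "(\<Sum>r<L0. B r) \<le> (1 / (1 - q)) ^ n" .
  qed (use q A0 B0 in \<open>auto intro: sum_nonneg\<close>)
  finally have "(\<Sum>l<L0. \<Sum>i\<le>l. A i * B (l - i)) \<le> (1 / (1 - q)) ^ (\<Sum>m<length ks. blk_len ks m) * (1 / (1 - q)) ^ n" .
  then show "(\<Sum>l<L0. M2 ks a \<rho> l) \<le> ZR * ((1 / (1 - q)) ^ (\<Sum>m<length ks. blk_len ks m) * (1 / (1 - q)) ^ n)"
    unfolding M2eq sum_distrib_left[symmetric] using ZR0 by (rule mult_left_mono)
qed



lemma rho_exists: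
  fixes \<beta> :: complex
  assumes "compact K" "K \<subseteq> {\<alpha>. cmod (\<alpha> - \<beta>) < Re \<beta> / 2}" "Re \<beta> > 0"
  shows "\<exists>\<rho>. 0 \<le> \<rho> \<and> \<rho> < Re \<beta> / 2 \<and> (\<forall>\<alpha>\<in>K. cmod (\<alpha> - \<beta>) \<le> \<rho>)"
proof (cases "K = {}")
  case True then show ?thesis using assms by (intro exI[of _ 0]) auto
next
  case False
  have "continuous_on K (\<lambda>\<alpha>. cmod (\<alpha> - \<beta>))" by (intro continuous_intros)
  then obtain x where x: "x \<in> K" "\<forall>y\<in>K. cmod (y - \<beta>) \<le> cmod (x - \<beta>)"
    using continuous_attains_sup[OF assms(1) False] by blast
  show ?thesis using x assms(2) by (intro exI[of _ "cmod (x - \<beta>)"]) auto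
qed

lemma main_bound:
  fixes \<beta> :: complex and ks :: "nat list"
  assumes ks: "adm ks" and b: "Re \<beta> > 0" and K: "compact K" "K \<subseteq> {\<alpha>. cmod (\<alpha> - \<beta>) < Re \<beta> / 2}"
  shows "\<exists>Ma Mb. summable Ma \<and> summable Mb \<and> (\<forall>\<alpha>\<in>K. \<forall>l. norm (series1_term ks \<beta> \<alpha> l) \<le> Ma l
           \<and> norm (series2_term ks \<beta> \<alpha> l) \<le> Mb l)"
proof -
  obtain \<rho> where \<rho>: "0 \<le> \<rho>" "\<rho> < Re \<beta> / 2" "\<forall>\<alpha>\<in>K. cmod (\<alpha> - \<beta>) \<le> \<rho>"
    using rho_exists[OF K b] by blast
  define a where "a = Re \<beta> - \<rho>"
  define t where "t = (\<rho> + a) / 2"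
  have a: "a > 0" "\<rho> < a" using \<rho> by (auto simp: a_def)
  have t: "\<rho> < t" "t < a" "t > 0" using a \<rho> by (auto simp: t_def)
  obtain C where C: "C \<ge> 0" "\<forall>N\<ge>1. U a (a - \<rho>) summable_on Srt N \<and> infsum (U a (a - \<rho>)) (Srt N) \<le> C * (1/t)^N"
    using Phi[of "a - \<rho>" a t] a \<rho> t by auto
  have n1: "length ks \<ge> 1" using ks by (cases ks) (auto simp: adm_def)
  have Rea: "Re \<alpha> \<ge> a" if "\<alpha> \<in> K" for \<alpha>
  proof -
    have "- Re (\<alpha> - \<beta>) \<le> cmod (\<alpha> - \<beta>)" using abs_Re_le_cmod[of "\<alpha> - \<beta>"] by linarith
    moreover have "cmod (\<alpha> - \<beta>) \<le> \<rho>" using \<rho>(3) that by blast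
    ultimately show ?thesis by (simp add: a_def)
  qed
  show ?thesis
  proof (intro exI conjI ballI allI)
    show "summable (M1 ks a \<rho>)" using series1_summable[OF ks a(1) \<rho>(1) t(1) t(2)] C by blast
    show "summable (M2 ks a \<rho>)" using series2_summable[OF a(1) \<rho>(1) a(2)] .
    fix \<alpha> l assume \<alpha>: "\<alpha> \<in> K"
    show "norm (series1_term ks \<beta> \<alpha> l) \<le> M1 ks a \<rho> l"
      using series1_le[OF ks a(1) Rea[OF \<alpha>] \<rho>(1) a(2)] \<rho>(3) \<alpha> C by blast
    show "norm (series2_term ks \<beta> \<alpha> l) \<le> M2 ks a \<rho> l"
      using series2_le[OF ks a(1) Rea[OF \<alpha>] \<rho>(1) a(2)] \<rho>(3) \<alpha> C n1 by blast
  qed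
qed

theorem lemma3p1:
  fixes ks :: "nat list" and \<beta> :: complex
  assumes "admissible ks" and "Re \<beta> > 0"
  defines "D \<equiv> {\<alpha>::complex. cmod (\<alpha> - \<beta>) < Re \<beta> / 2}"
  shows "(\<forall>\<alpha>\<in>D. summable (\<lambda>l. norm (series1_term ks \<beta> \<alpha> l)))
       \<and> (\<forall>K. compact K \<and> K \<subseteq> D \<longrightarrow>
              uniformly_convergent_on K (\<lambda>N \<alpha>. \<Sum>l<N. series1_term ks \<beta> \<alpha> l))
       \<and> (\<forall>\<alpha>\<in>D. summable (\<lambda>l. norm (series2_term ks \<beta> \<alpha> l)))
       \<and> (\<forall>K. compact K \<and> K \<subseteq> D \<longrightarrow>
              uniformly_convergent_on K (\<lambda>N \<alpha>. \<Sum>l<N. series2_term ks \<beta> \<alpha> l))"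
proof -
  have ks: "adm ks" using assms(1) by (auto simp: admissible_def adm_def Suc_le_eq)
  have pt: "summable (\<lambda>l. norm (series1_term ks \<beta> \<alpha> l)) \<and> summable (\<lambda>l. norm (series2_term ks \<beta> \<alpha> l))"
    if \<alpha>D: "\<alpha> \<in> D" for \<alpha>
  proof -
    obtain Ma Mb where M: "summable Ma" "summable Mb" "\<forall>\<alpha>'\<in>{\<alpha>}. \<forall>l. norm (series1_term ks \<beta> \<alpha>' l) \<le> Ma l
           \<and> norm (series2_term ks \<beta> \<alpha>' l) \<le> Mb l"
    proof -
      have "{\<alpha>} \<subseteq> {\<alpha>. cmod (\<alpha> - \<beta>) < Re \<beta> / 2}" using \<alpha>D by (simp add: D_def)
      from main_bound[OF ks assms(2) compact_sing this] show ?thesis using that by blast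
    qed
    show ?thesis using M by (auto intro: summable_comparison_test'[where N=0])
  qed
  have uc: "uniformly_convergent_on K (\<lambda>N \<alpha>. \<Sum>l<N. series1_term ks \<beta> \<alpha> l)
      \<and> uniformly_convergent_on K (\<lambda>N \<alpha>. \<Sum>l<N. series2_term ks \<beta> \<alpha> l)" if KD: "compact K" "K \<subseteq> D" for K
  proof -
    obtain Ma Mb where M: "summable Ma" "summable Mb" "\<forall>\<alpha>\<in>K. \<forall>l. norm (series1_term ks \<beta> \<alpha> l) \<le> Ma l
           \<and> norm (series2_term ks \<beta> \<alpha> l) \<le> Mb l"
    proof -
      have "K \<subseteq> {\<alpha>. cmod (\<alpha> - \<beta>) < Re \<beta> / 2}" using KD by (simp add: D_def)
      from main_bound[OF ks assms(2) KD(1) this] show ?thesis using that by blast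
    qed
    show ?thesis using M by (auto intro!: Weierstrass_m_test')
  qed
  show ?thesis using pt uc by blast
qed



end
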